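(* Let $K$ be a finite simplicial complex, $L$ a full subcomplex, $W$ the union of the simplices of $K$ not meeting $L$, $p$ a positive even integer, $T\in C^p(K,W;\mathbb Q)$ a cocycle, $K^*$ a subcomplex of $K$ and $L^*=K^*\cap L$. For a good ordering $\mathcal O$ of $K$ with respect to $L$, the chain map $\alpha\mapsto T\overset{\mathcal O}{\cap}\alpha$ induces a homomorphism $H_{p+q}(K,K^*;\mathbb Q)\to H_q(L,L^*;\mathbb Q)$. This homomorphism is independent of the choice of the good ordering $\mathcal O$.
   Context: A subcomplex $L$ of $K$ is full if every simplex of $K$ all of whose vertices lie in $L$ belongs to $L$. $C^p(K,W;\mathbb Q)$ consists of simplicial $p$-cochains vanishing on simplices contained in $W$. An ordering of $K$ is a partial order on the vertices whose restriction to the vertices of each simplex is a total order; it is good with respect to $L$ if whenever $v$ is a vertex of $L$ and $w\ge v$, then $w$ is a vertex of $L$. For $\alpha=[v_0,\dots,v_k]$ with $v_0<\dots<v_k$, $T\overset{\mathcal O}{\cap}\alpha=T([v_0,\dots,v_p])[v_p,\dots,v_k]$, extended linearly. *)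

theory Defs
  imports Complex_Main
begin

text \<open>The linear order
of the vertex type only serves to fix a reference orientation of each simplex,
so that oriented chains and cochains can be represented as functions on
(unoriented) simplices.\<close>

definition simplicial_complex :: "'v set set \<Rightarrow> bool" where
  "simplicial_complex K \<longleftrightarrow> finite K \<and> (\<forall>\<sigma>\<in>K. finite \<sigma> \<and> \<sigma> \<noteq> {}) \<and>
     (\<forall>\<sigma>\<in>K. \<forall>\<tau>. \<tau> \<subseteq> \<sigma> \<and> \<tau> \<noteq> {} \<longrightarrow> \<tau> \<in> K)"

definition subcomplex :: "'v set set \<Rightarrow> 'v set set \<Rightarrow> bool" where
  "subcomplex L K \<longleftrightarrow> simplicial_complex L \<and> L \<subseteq> K"

definition full_subcomplex :: "'v set set \<Rightarrow> 'v set set \<Rightarrow> bool" where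
  "full_subcomplex L K \<longleftrightarrow> subcomplex L K \<and> (\<forall>\<sigma>\<in>K. \<sigma> \<subseteq> \<Union>L \<longrightarrow> \<sigma> \<in> L)"

text \<open>W: the subcomplex formed by the simplices of K not meeting L (a simplex
lies in the union of these iff it is one of them).\<close>
definition Wcomplex :: "'v set set \<Rightarrow> 'v set set \<Rightarrow> 'v set set" where
  "Wcomplex K L = {\<sigma>\<in>K. \<sigma> \<inter> \<Union>L = {}}"

text \<open>Rational k-chains of K: coefficient functions on k-simplices of K,
with respect to the reference orientation (increasing vertex order).\<close>
definition chain :: "'v set set \<Rightarrow> nat \<Rightarrow> ('v set \<Rightarrow> rat) \<Rightarrow> bool" where
  "chain K k c \<longleftrightarrow> (\<forall>\<sigma>. c \<sigma> \<noteq> 0 \<longrightarrow> \<sigma> \<in> K \<and> card \<sigma> = Suc k)"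

definition incid :: "'v::linorder set \<Rightarrow> 'v set \<Rightarrow> rat" where
  "incid \<sigma> \<tau> = (if \<tau> \<subseteq> \<sigma> \<and> card \<sigma> = Suc (card \<tau>) \<and> \<tau> \<noteq> {}
      then (-1) ^ card {w\<in>\<sigma>. w < the_elem (\<sigma> - \<tau>)} else 0)"

definition bd :: "'v::linorder set set \<Rightarrow> ('v set \<Rightarrow> rat) \<Rightarrow> ('v set \<Rightarrow> rat)" where
  "bd K c = (\<lambda>\<tau>. \<Sum>\<sigma>\<in>K. c \<sigma> * incid \<sigma> \<tau>)"

definition rel_cycle :: "'v::linorder set set \<Rightarrow> 'v set set \<Rightarrow> nat \<Rightarrow> ('v set \<Rightarrow> rat) \<Rightarrow> bool" where
  "rel_cycle K K0 n c \<longleftrightarrow> chain K n c \<and> chain K0 (n - 1) (bd K c)"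

definition rel_boundary :: "'v::linorder set set \<Rightarrow> 'v set set \<Rightarrow> nat \<Rightarrow> ('v set \<Rightarrow> rat) \<Rightarrow> bool" where
  "rel_boundary K K0 n c \<longleftrightarrow>
     (\<exists>d e. chain K (Suc n) d \<and> chain K0 n e \<and> c = (\<lambda>\<tau>. bd K d \<tau> + e \<tau>))"

definition rel_cochain :: "'v set set \<Rightarrow> 'v set set \<Rightarrow> nat \<Rightarrow> ('v set \<Rightarrow> rat) \<Rightarrow> bool" where
  "rel_cochain K W p T \<longleftrightarrow> (\<forall>\<sigma>. T \<sigma> \<noteq> 0 \<longrightarrow> \<sigma> \<in> K \<and> card \<sigma> = Suc p \<and> \<sigma> \<notin> W)"

definition cocycle :: "'v::linorder set set \<Rightarrow> nat \<Rightarrow> ('v set \<Rightarrow> rat) \<Rightarrow> bool" where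
  "cocycle K p T \<longleftrightarrow> (\<forall>\<tau>\<in>K. card \<tau> = p + 2 \<longrightarrow> (\<Sum>\<sigma>\<in>K. incid \<tau> \<sigma> * T \<sigma>) = 0)"

definition ordering :: "'v set set \<Rightarrow> ('v \<Rightarrow> 'v \<Rightarrow> bool) \<Rightarrow> bool" where
  "ordering K R \<longleftrightarrow>
     (\<forall>x\<in>\<Union>K. R x x) \<and>
     (\<forall>x\<in>\<Union>K. \<forall>y\<in>\<Union>K. R x y \<and> R y x \<longrightarrow> x = y) \<and>
     (\<forall>x\<in>\<Union>K. \<forall>y\<in>\<Union>K. \<forall>z\<in>\<Union>K. R x y \<and> R y z \<longrightarrow> R x z) \<and>
     (\<forall>\<sigma>\<in>K. \<forall>x\<in>\<sigma>. \<forall>y\<in>\<sigma>. R x y \<or> R y x)"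

definition good_ordering :: "'v set set \<Rightarrow> 'v set set \<Rightarrow> ('v \<Rightarrow> 'v \<Rightarrow> bool) \<Rightarrow> bool" where
  "good_ordering K L R \<longleftrightarrow> ordering K R \<and>
     (\<forall>v\<in>\<Union>L. \<forall>w\<in>\<Union>K. R v w \<longrightarrow> w \<in> \<Union>L)"

definition olist :: "('v \<Rightarrow> 'v \<Rightarrow> bool) \<Rightarrow> 'v set \<Rightarrow> 'v list" where
  "olist R \<sigma> = (THE xs. set xs = \<sigma> \<and> distinct xs \<and> sorted_wrt R xs)"

text \<open>Number of inversions of a vertex list relative to the reference order;
the oriented simplex [xs] equals (-1)^inv xs times the reference-oriented one.\<close>
definition inv_count :: "'v::linorder list \<Rightarrow> nat" where
  "inv_count xs = card {(i, j). i < j \<and> j < length xs \<and> xs ! j < xs ! i}"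

definition osimp :: "'v::linorder list \<Rightarrow> ('v set \<Rightarrow> rat)" where
  "osimp xs = (\<lambda>\<tau>. if \<tau> = set xs then (-1) ^ inv_count xs else 0)"

definition cochain_eval :: "('v set \<Rightarrow> rat) \<Rightarrow> 'v::linorder list \<Rightarrow> rat" where
  "cochain_eval T xs = (-1) ^ inv_count xs * T (set xs)"

text \<open>T cap_O on the reference-oriented simplex \<sigma>: writing \<sigma> = \<epsilon> [v0,...,vk]
with v0 < ... < vk in R, the result is \<epsilon> T([v0..vp]) [vp..vk].\<close>
definition cap_simplex :: "nat \<Rightarrow> ('v \<Rightarrow> 'v \<Rightarrow> bool) \<Rightarrow> ('v set \<Rightarrow> rat) \<Rightarrow> 'v::linorder set \<Rightarrow> ('v set \<Rightarrow> rat)" where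
  "cap_simplex p R T \<sigma> = (let xs = olist R \<sigma> in
     if p < length xs then
       (\<lambda>\<tau>. (-1) ^ inv_count xs * cochain_eval T (take (Suc p) xs) * osimp (drop p xs) \<tau>)
     else (\<lambda>_. 0))"

definition cap :: "'v::linorder set set \<Rightarrow> nat \<Rightarrow> ('v \<Rightarrow> 'v \<Rightarrow> bool) \<Rightarrow> ('v set \<Rightarrow> rat) \<Rightarrow> ('v set \<Rightarrow> rat) \<Rightarrow> ('v set \<Rightarrow> rat)" where
  "cap K p R T c = (\<lambda>\<tau>. \<Sum>\<sigma>\<in>K. c \<sigma> * cap_simplex p R T \<sigma> \<tau>)"

end

theory Submission
  imports Defs
begin



fun invr :: "'v::linorder list \<Rightarrow> nat" where
  "invr [] = 0"
| "invr (x # xs) = length (filter (\<lambda>y. y < x) xs) + invr xs"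

lemma inv_count_Cons: "inv_count (x # xs) = length (filter (\<lambda>y. y < x) xs) + inv_count xs"
proof -
  let ?S = "\<lambda>xs::'a list. {(i, j). i < j \<and> j < length xs \<and> xs ! j < xs ! i}"
  have fin: "finite (?S ys)" for ys :: "'a list"
    by (rule finite_subset[of _ "{..<length ys} \<times> {..<length ys}"]) auto
  have eq: "?S (x#xs) = (\<lambda>j. (0, Suc j)) ` {j. j < length xs \<and> xs ! j < x} \<union> (\<lambda>(i,j). (Suc i, Suc j)) ` ?S xs"
  proof (rule set_eqI, clarify)
    fix i j
    show "((i, j) \<in> ?S (x#xs)) = ((i, j) \<in> (\<lambda>j. (0, Suc j)) ` {j. j < length xs \<and> xs ! j < x} \<union> (\<lambda>(i,j). (Suc i, Suc j)) ` ?S xs)"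
      by (cases i; cases j) (auto simp: image_iff)
  qed
  have "card (?S (x#xs)) = card ((\<lambda>j. (0::nat, Suc j)) ` {j. j < length xs \<and> xs ! j < x}) + card ((\<lambda>(i,j). (Suc i, Suc j)) ` ?S xs)"
    unfolding eq by (rule card_Un_disjoint) (use fin in auto)
  also have "card ((\<lambda>j. (0::nat, Suc j)) ` {j. j < length xs \<and> xs ! j < x}) = card {j. j < length xs \<and> xs ! j < x}"
    by (rule card_image) (auto simp: inj_on_def)
  also have "\<dots> = length (filter (\<lambda>y. y < x) xs)" by (simp add: length_filter_conv_card)
  also have "card ((\<lambda>(i,j). (Suc i, Suc j)) ` ?S xs) = card (?S xs)"
    by (rule card_image) (auto simp: inj_on_def)
  finally show ?thesis unfolding inv_count_def by simp
qed

lemma inv_count_invr: "inv_count xs = invr xs"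
  by (induction xs) (auto simp: inv_count_Cons, simp add: inv_count_def)

lemma invr_mid: "invr (ys @ x # zs) = invr (ys @ zs) + length (filter (\<lambda>y. x < y) ys) + length (filter (\<lambda>z. z < x) zs)"
  by (induction ys) auto

definition dl :: "nat \<Rightarrow> 'a list \<Rightarrow> 'a list" where
  "dl i xs = take i xs @ drop (Suc i) xs"

lemma length_dl[simp]: "i < length xs \<Longrightarrow> length (dl i xs) = length xs - 1"
  by (simp add: dl_def)

lemma set_dl: "distinct xs \<Longrightarrow> i < length xs \<Longrightarrow> set (dl i xs) = set xs - {xs ! i}"
proof -
  assume d: "distinct xs" and i: "i < length xs"
  have xs: "xs = take i xs @ xs ! i # drop (Suc i) xs" using i by (simp add: id_take_nth_drop)
  have "distinct (take i xs @ xs ! i # drop (Suc i) xs)" using d xs by simp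
  then show ?thesis unfolding dl_def by (subst (2) xs) auto
qed

lemma distinct_dl: "distinct xs \<Longrightarrow> distinct (dl i xs)"
  unfolding dl_def using set_take_disj_set_drop_if_distinct[of xs i "Suc i"] by simp

lemma incid_remove:
  assumes "finite s" "x \<in> s" "s - {x} \<noteq> {}"
  shows "incid s (s - {x}) = (-1) ^ card {w\<in>s. w < x}"
proof -
  have "card s = Suc (card (s - {x}))" using assms by (metis card_Suc_Diff1)
  moreover have "s - (s - {x}) = {x}" using assms by auto
  ultimately show ?thesis using assms unfolding incid_def by auto
qed

lemma incid_nz:
  assumes "incid s t \<noteq> 0" "finite s"
  shows "\<exists>x\<in>s. t = s - {x} \<and> t \<noteq> {}"
proof -
  have t: "t \<subseteq> s" "card s = Suc (card t)" "t \<noteq> {}" using assms(1) unfolding incid_def by (auto split: if_splits)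
  have "card (s - t) = 1" using t assms(2) by (simp add: card_Diff_subset finite_subset)
  then obtain x where "s - t = {x}" by (auto simp: card_Suc_eq)
  then show ?thesis using t by (intro bexI[of _ x]) auto
qed

lemma lemmaA:
  fixes xs :: "'v::linorder list"
  assumes d: "distinct xs" and i: "i < length xs" and l: "2 \<le> length xs"
  shows "incid (set xs) (set (dl i xs)) = (-1) ^ (inv_count xs + i + inv_count (dl i xs))"
proof -
  define ys where "ys = take i xs"
  define x where "x = xs ! i"
  define zs where "zs = drop (Suc i) xs"
  have xs: "xs = ys @ x # zs" unfolding ys_def x_def zs_def using i by (simp add: id_take_nth_drop)
  have dlx: "dl i xs = ys @ zs" unfolding dl_def ys_def zs_def ..
  have lys: "length ys = i" unfolding ys_def using i by simp
  have dd: "distinct (ys @ x # zs)" using d xs by simp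
  have ne: "set xs - {x} \<noteq> {}"
  proof
    assume "set xs - {x} = {}"
    then have "set xs \<subseteq> {x}" by auto
    then have "card (set xs) \<le> card {x}" by (intro card_mono) auto
    with d l show False by (simp add: distinct_card)
  qed
  have sd: "set (dl i xs) = set xs - {x}" unfolding x_def using set_dl[OF d i] .
  have c1: "card {w\<in>set xs. w < x} = length (filter (\<lambda>w. w < x) xs)"
  proof -
    have "{w\<in>set xs. w < x} = set (filter (\<lambda>w. w < x) xs)" by auto
    then show ?thesis using d distinct_card[of "filter (\<lambda>w. w < x) xs"] by simp
  qed
  have xny: "x \<notin> set ys" using dd by simp
  have c2: "length (filter (\<lambda>w. w < x) ys) + length (filter (\<lambda>y. x < y) ys) = i"
  proof -
    have "filter (\<lambda>y. x < y) ys = filter (\<lambda>w. \<not> w < x) ys"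
      using xny by (intro filter_cong) (auto, metis antisym_conv3)
    then show ?thesis using sum_length_filter_compl[of "\<lambda>w. w < x" ys] lys by simp
  qed
  have "inv_count xs + i + inv_count (dl i xs) =
     (length (filter (\<lambda>w. w < x) ys) + length (filter (\<lambda>z. z < x) zs)) + 2 * (invr (ys @ zs) + length (filter (\<lambda>y. x < y) ys))"
  proof -
    have e1: "inv_count xs = invr (ys @ zs) + length (filter (\<lambda>y. x < y) ys) + length (filter (\<lambda>z. z < x) zs)"
      by (subst xs) (simp only: inv_count_invr invr_mid)
    have e2: "inv_count (dl i xs) = invr (ys @ zs)" by (simp add: inv_count_invr dlx)
    show ?thesis unfolding e1 e2 using c2 by simp
  qed
  moreover have "card {w\<in>set xs. w < x} = length (filter (\<lambda>w. w < x) ys) + length (filter (\<lambda>z. z < x) zs)"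
    unfolding c1 by (subst xs) simp
  ultimately show ?thesis unfolding sd
    using incid_remove[of "set xs" x] ne i by (simp add: x_def power_add power_mult)
qed

lemma neg1_sq[simp]: "(-1::rat) ^ n * (-1) ^ n = 1"
  by (simp add: power_mult_distrib[symmetric])

lemma neg1_double[simp]: "(-1::rat) ^ (n + n) = 1"
  by (simp add: power_add)

lemma sc_face: "simplicial_complex K \<Longrightarrow> s \<in> K \<Longrightarrow> t \<subseteq> s \<Longrightarrow> t \<noteq> {} \<Longrightarrow> t \<in> K"
  unfolding simplicial_complex_def by blast

lemma sc_fin: "simplicial_complex K \<Longrightarrow> s \<in> K \<Longrightarrow> finite s"
  unfolding simplicial_complex_def by blast

lemma sc_ne: "simplicial_complex K \<Longrightarrow> s \<in> K \<Longrightarrow> s \<noteq> {}"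
  unfolding simplicial_complex_def by blast

lemma sc_finK: "simplicial_complex K \<Longrightarrow> finite K"
  unfolding simplicial_complex_def by blast

lemma set_dl_ne: "distinct xs \<Longrightarrow> i < length xs \<Longrightarrow> 2 \<le> length xs \<Longrightarrow> set (dl i xs) \<noteq> {}"
  by (metis One_nat_def Suc_1 Suc_le_eq diff_is_0_eq length_dl not_less_eq_eq set_empty length_0_conv)

lemma bd_list:
  fixes xs :: "'v::linorder list"
  assumes K: "simplicial_complex K" and d: "distinct xs" and xK: "set xs \<in> K" and l: "2 \<le> length xs"
  shows "(\<Sum>\<rho>\<in>K. incid (set xs) \<rho> * G \<rho>) =
     (\<Sum>i<length xs. (-1) ^ (inv_count xs + i + inv_count (dl i xs)) * G (set (dl i xs)))"
proof -
  let ?f = "\<lambda>i. set (dl i xs)"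
  have AK: "?f ` {..<length xs} \<subseteq> K"
    using set_dl[OF d] set_dl_ne[OF d _ l] sc_face[OF K xK] by auto
  have inj: "inj_on ?f {..<length xs}"
  proof (rule inj_onI)
    fix i j assume i: "i \<in> {..<length xs}" and j: "j \<in> {..<length xs}" and e: "?f i = ?f j"
    have "xs ! i \<in> set xs" "xs ! j \<in> set xs" using i j by auto
    then have "xs ! i = xs ! j" using e set_dl[OF d] i j by auto
    then show "i = j" using d i j by (simp add: nth_eq_iff_index_eq)
  qed
  have "(\<Sum>\<rho>\<in>K. incid (set xs) \<rho> * G \<rho>) = (\<Sum>\<rho>\<in>?f ` {..<length xs}. incid (set xs) \<rho> * G \<rho>)"
  proof (rule sum.mono_neutral_right)
    show "finite K" using sc_finK[OF K] .
    show "?f ` {..<length xs} \<subseteq> K" using AK .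
    show "\<forall>\<rho>\<in>K - ?f ` {..<length xs}. incid (set xs) \<rho> * G \<rho> = 0"
    proof
      fix \<rho> assume \<rho>: "\<rho> \<in> K - ?f ` {..<length xs}"
      show "incid (set xs) \<rho> * G \<rho> = 0"
      proof (rule ccontr)
        assume "incid (set xs) \<rho> * G \<rho> \<noteq> 0"
        then have "incid (set xs) \<rho> \<noteq> 0" by auto
        then obtain x where x: "x \<in> set xs" "\<rho> = set xs - {x}" using incid_nz by blast
        then obtain i where i: "i < length xs" "xs ! i = x" by (auto simp: in_set_conv_nth)
        then have "\<rho> = ?f i" using x set_dl[OF d] by auto
        then show False using \<rho> i by auto
      qed
    qed
  qed
  also have "\<dots> = (\<Sum>i<length xs. incid (set xs) (?f i) * G (?f i))"
    by (simp add: sum.reindex[OF inj])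
  also have "\<dots> = (\<Sum>i<length xs. (-1) ^ (inv_count xs + i + inv_count (dl i xs)) * G (set (dl i xs)))"
    using lemmaA[OF d _ l] by simp
  finally show ?thesis .
qed

lemma bd_osimp:
  assumes "finite K" shows "bd K (osimp ys) \<tau> = (if set ys \<in> K then (-1) ^ inv_count ys * incid (set ys) \<tau> else 0)"
proof -
  have "bd K (osimp ys) \<tau> = (\<Sum>\<sigma>\<in>K. if \<sigma> = set ys then (-1) ^ inv_count ys * incid (set ys) \<tau> else 0)"
    unfolding bd_def osimp_def by (intro sum.cong) auto
  then show ?thesis using assms by simp
qed

lemma incid_single: "incid {x} \<tau> = 0"
  unfolding incid_def by (auto simp: subset_singleton_iff)

definition lbd :: "'v::linorder list \<Rightarrow> 'v set \<Rightarrow> rat" where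
  "lbd ys = (\<lambda>\<tau>. if 2 \<le> length ys then (\<Sum>j<length ys. (-1) ^ j * osimp (dl j ys) \<tau>) else 0)"

lemma bd_osimp_lbd:
  fixes ys :: "'v::linorder list"
  assumes K: "simplicial_complex K" and d: "distinct ys" and yK: "set ys \<in> K"
  shows "bd K (osimp ys) = lbd ys"
proof
  fix \<tau>
  show "bd K (osimp ys) \<tau> = lbd ys \<tau>"
  proof (cases "2 \<le> length ys")
    case False
    have "ys \<noteq> []" using sc_ne[OF K yK] by auto
    with False obtain x where "ys = [x]" by (cases ys) (auto simp: Suc_le_eq)
    then show ?thesis using False unfolding bd_osimp[OF sc_finK[OF K]] lbd_def by (simp add: incid_single)
  next
    case l: True
    have inc: "incid (set ys) \<tau> = (\<Sum>\<rho>\<in>K. incid (set ys) \<rho> * (if \<rho> = \<tau> then 1 else 0))"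
    proof (cases "\<tau> \<in> K")
      case True then show ?thesis using sc_finK[OF K] by (simp add: if_distrib cong: if_cong)
    next
      case False
      have "incid (set ys) \<tau> = 0"
      proof (rule ccontr)
        assume "incid (set ys) \<tau> \<noteq> 0"
        then obtain x where "\<tau> = set ys - {x}" "\<tau> \<noteq> {}" using incid_nz by blast
        then have "\<tau> \<in> K" using sc_face[OF K yK] by auto
        then show False using False by simp
      qed
      moreover have "(\<Sum>\<rho>\<in>K. incid (set ys) \<rho> * (if \<rho> = \<tau> then 1 else 0)) = 0"
        using False by (intro sum.neutral) auto
      ultimately show ?thesis by simp
    qed
    have "bd K (osimp ys) \<tau> = (-1) ^ inv_count ys * (\<Sum>i<length ys. (-1) ^ (inv_count ys + i + inv_count (dl i ys)) * (if set (dl i ys) = \<tau> then 1 else 0))"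
      unfolding bd_osimp[OF sc_finK[OF K]] using yK inc bd_list[OF K d yK l] by simp
    also have "\<dots> = (\<Sum>i<length ys. (-1) ^ i * osimp (dl i ys) \<tau>)"
      unfolding sum_distrib_left osimp_def
      by (intro sum.cong) (auto simp: power_add)
    finally show ?thesis unfolding lbd_def using l by simp
  qed
qed

lemma cocycle_list:
  fixes xs :: "'v::linorder list"
  assumes K: "simplicial_complex K" and d: "distinct xs" and xK: "set xs \<in> K" and l: "length xs = p + 2"
    and coc: "cocycle K p T"
  shows "(\<Sum>i<length xs. (-1) ^ i * cochain_eval T (dl i xs)) = 0"
proof -
  have "card (set xs) = p + 2" using d l by (simp add: distinct_card)
  then have "(\<Sum>\<rho>\<in>K. incid (set xs) \<rho> * T \<rho>) = 0" using coc xK unfolding cocycle_def by blast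
  then have "(\<Sum>i<length xs. (-1) ^ (inv_count xs + i + inv_count (dl i xs)) * T (set (dl i xs))) = 0"
    using bd_list[OF K d xK] l by simp
  then have "(-1) ^ inv_count xs * (\<Sum>i<length xs. (-1) ^ (inv_count xs + i + inv_count (dl i xs)) * T (set (dl i xs))) = 0"
    by simp
  moreover have "(-1) ^ inv_count xs * (\<Sum>i<length xs. (-1) ^ (inv_count xs + i + inv_count (dl i xs)) * T (set (dl i xs)))
     = (\<Sum>i<length xs. (-1) ^ i * cochain_eval T (dl i xs))"
    unfolding sum_distrib_left cochain_eval_def by (intro sum.cong) (auto simp: power_add)
  ultimately show ?thesis by simp
qed

lemma sum_lt_add: "(\<Sum>i<m+(k::nat). f i) = (\<Sum>i<m. f i) + (\<Sum>j<k. f (m + j))"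
  by (induction k) (auto simp: add.assoc)





lemma exists_min:
  assumes "finite F" "F \<noteq> {}" "\<forall>x\<in>F. \<forall>y\<in>F. R x y \<or> R y x"
    "\<forall>x\<in>F. \<forall>y\<in>F. \<forall>z\<in>F. R x y \<and> R y z \<longrightarrow> R x z"
  shows "\<exists>m\<in>F. \<forall>y\<in>F. R m y"
  using assms
proof (induction F rule: finite_ne_induct)
  case (singleton x)
  have "R x x \<or> R x x" using singleton.prems(1) by (meson singletonI)
  then show ?case by (intro bexI[of _ x]) auto
next
  case (insert x F)
  have t1: "\<forall>x\<in>F. \<forall>y\<in>F. R x y \<or> R y x" using insert.prems(1) by blast
  have t2: "\<forall>x\<in>F. \<forall>y\<in>F. \<forall>z\<in>F. R x y \<and> R y z \<longrightarrow> R x z" using insert.prems(2) by blast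
  obtain m where m: "m \<in> F" "\<forall>y\<in>F. R m y" using insert.IH[OF t1 t2] by blast
  show ?case
  proof (cases "R x m")
    case True
    have "R x y" if "y \<in> insert x F" for y
    proof (cases "y = x")
      case True then show ?thesis using insert.prems(1) by auto
    next
      case False
      then have "y \<in> F" using that by auto
      then have "R m y" using m by auto
      have "x \<in> insert x F" "m \<in> insert x F" "y \<in> insert x F" using m \<open>y \<in> F\<close> by auto
      then show ?thesis using \<open>R x m\<close> \<open>R m y\<close> insert.prems(2) by blast
    qed
    then show ?thesis by auto
  next
    case False
    have "x \<in> insert x F" "m \<in> insert x F" using m by auto
    then have "R m x" using insert.prems(1) False by blast
    then show ?thesis using m by auto
  qed
qed

lemma exists_sorted:
  assumes "finite F" "\<forall>x\<in>F. \<forall>y\<in>F. R x y \<or> R y x"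
    "\<forall>x\<in>F. \<forall>y\<in>F. \<forall>z\<in>F. R x y \<and> R y z \<longrightarrow> R x z"
  shows "\<exists>xs. set xs = F \<and> distinct xs \<and> sorted_wrt R xs"
  using assms
proof (induction "card F" arbitrary: F)
  case 0
  have "F = {}" using "0.hyps" "0.prems"(1) by simp
  then show ?case by (intro exI[of _ "[]"]) simp
next
  case (Suc n)
  have ne: "F \<noteq> {}" using Suc.hyps(2) by (metis card.empty nat.distinct(1))
  obtain m where m: "m \<in> F" "\<forall>y\<in>F. R m y" using exists_min[OF Suc.prems(1) ne Suc.prems(2,3)] by blast
  have c: "n = card (F - {m})" using Suc.hyps(2) m(1) Suc.prems(1) by (simp add: card_Diff_singleton)
  have t1: "\<forall>x\<in>F - {m}. \<forall>y\<in>F - {m}. R x y \<or> R y x" using Suc.prems(2) by blast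
  have t2: "\<forall>x\<in>F - {m}. \<forall>y\<in>F - {m}. \<forall>z\<in>F - {m}. R x y \<and> R y z \<longrightarrow> R x z" using Suc.prems(3) by blast
  have f: "finite (F - {m})" using Suc.prems(1) by blast
  obtain xs where xs: "set xs = F - {m}" "distinct xs" "sorted_wrt R xs"
    using Suc.hyps(1)[OF c f t1 t2] by blast
  have "set (m # xs) = F" using xs(1) m(1) by auto
  moreover have "distinct (m # xs)" using xs by simp
  moreover have "sorted_wrt R (m # xs)" using xs m(2) by simp
  ultimately show ?case by blast
qed

lemma sorted_unique:
  assumes "set xs = set ys" "distinct xs" "distinct ys" "sorted_wrt R xs" "sorted_wrt R ys"
    "\<forall>x\<in>set xs. \<forall>y\<in>set xs. R x y \<and> R y x \<longrightarrow> x = y"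
  shows "xs = ys"
  using assms
proof (induction xs arbitrary: ys)
  case Nil then show ?case by simp
next
  case (Cons x xs)
  have "x \<in> set ys" using Cons.prems(1) by (metis list.set_intros(1))
  then obtain y ys' where ys: "ys = y # ys'" by (cases ys) auto
  have xy: "x = y"
  proof (rule ccontr)
    assume ne: "x \<noteq> y"
    have xin: "x \<in> set ys'" using \<open>x \<in> set ys\<close> ys ne by simp
    have yin: "y \<in> set xs" using Cons.prems(1) ys ne by (metis list.set_intros(1) set_ConsD)
    have r1: "R y x" using Cons.prems(5) ys xin by simp
    have r2: "R x y" using Cons.prems(4) yin by simp
    have "x \<in> set (x # xs)" "y \<in> set (x # xs)" using yin by auto
    then have "x = y" using Cons.prems(6) r1 r2 by blast
    then show False using ne by simp
  qed
  have d1: "x \<notin> set xs" using Cons.prems(2) by simp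
  have d2: "x \<notin> set ys'" using Cons.prems(3) ys xy by simp
  have "set xs = set ys'"
  proof -
    have "insert x (set xs) = insert x (set ys')" using Cons.prems(1) ys xy by simp
    then show ?thesis using d1 d2 by (metis insert_ident)
  qed
  moreover have "\<forall>a\<in>set xs. \<forall>b\<in>set xs. R a b \<and> R b a \<longrightarrow> a = b" using Cons.prems(6) by simp
  ultimately have "xs = ys'" using Cons.IH[of ys'] Cons.prems(2,3,4,5) ys by simp
  then show ?case using xy ys by simp
qed

lemma ordering_props:
  assumes "ordering K R"
  shows "\<forall>x\<in>\<Union>K. \<forall>y\<in>\<Union>K. R x y \<and> R y x \<longrightarrow> x = y"
    "\<forall>x\<in>\<Union>K. \<forall>y\<in>\<Union>K. \<forall>z\<in>\<Union>K. R x y \<and> R y z \<longrightarrow> R x z"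
    "\<forall>\<sigma>\<in>K. \<forall>x\<in>\<sigma>. \<forall>y\<in>\<sigma>. R x y \<or> R y x"
  using assms unfolding ordering_def
  by (rule conjunct1[OF conjunct2], rule conjunct1[OF conjunct2[OF conjunct2]], rule conjunct2[OF conjunct2[OF conjunct2]])

lemma olist_props:
  assumes K: "simplicial_complex K" and R: "ordering K R" and s: "\<sigma> \<in> K"
  shows "set (olist R \<sigma>) = \<sigma> \<and> distinct (olist R \<sigma>) \<and> sorted_wrt R (olist R \<sigma>)"
proof -
  have ex: "\<exists>xs. set xs = \<sigma> \<and> distinct xs \<and> sorted_wrt R xs"
    apply (rule exists_sorted)
    using sc_fin[OF K s] ordering_props[OF R] s by blast+
  have "\<exists>!xs. set xs = \<sigma> \<and> distinct xs \<and> sorted_wrt R xs"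
  proof -
    obtain xs where xs: "set xs = \<sigma> \<and> distinct xs \<and> sorted_wrt R xs" using ex by blast
    moreover have "ys = xs" if "set ys = \<sigma> \<and> distinct ys \<and> sorted_wrt R ys" for ys
      apply (rule sorted_unique)
      using that xs ordering_props(1)[OF R] s by auto
    ultimately show ?thesis by blast
  qed
  then show ?thesis unfolding olist_def by (rule theI')
qed

lemma olist_sorted:
  assumes K: "simplicial_complex K" and R: "ordering K R" and s: "set ys \<in> K"
    and d: "distinct ys" and so: "sorted_wrt R ys"
  shows "olist R (set ys) = ys"
  apply (rule sorted_unique)
  using olist_props[OF K R s] d so ordering_props(1)[OF R] s by auto

lemma sorted_wrt_dl: "sorted_wrt R xs \<Longrightarrow> sorted_wrt R (dl i xs)"
proof -
  assume a: "sorted_wrt R xs"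
  then have "sorted_wrt R (take i xs @ drop i xs)" by simp
  then have h: "\<forall>x\<in>set (take i xs). \<forall>y\<in>set (drop i xs). R x y" unfolding sorted_wrt_append by (elim conjE)
  have "set (drop (Suc i) xs) \<subseteq> set (drop i xs)" by (rule set_drop_subset_set_drop) simp
  then show ?thesis unfolding dl_def using a h by (auto simp: sorted_wrt_append)
qed

definition capL :: "nat \<Rightarrow> ('v set \<Rightarrow> rat) \<Rightarrow> 'v::linorder list \<Rightarrow> 'v set \<Rightarrow> rat" where
  "capL p T xs = (\<lambda>\<tau>. if p < length xs then cochain_eval T (take (Suc p) xs) * osimp (drop p xs) \<tau> else 0)"

lemma capS_eq: "cap_simplex p R T \<sigma> \<tau> = (-1) ^ inv_count (olist R \<sigma>) * capL p T (olist R \<sigma>) \<tau>"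
  unfolding cap_simplex_def capL_def Let_def by simp

lemma capS_sorted:
  assumes K: "simplicial_complex K" and R: "ordering K R" and s: "set ys \<in> K"
    and d: "distinct ys" and so: "sorted_wrt R ys"
  shows "cap_simplex p R T (set ys) \<tau> = (-1) ^ inv_count ys * capL p T ys \<tau>"
  unfolding capS_eq olist_sorted[OF assms] ..





lemma hatcher:
  fixes xs :: "'v::linorder list"
  assumes K: "simplicial_complex K" and coc: "cocycle K p T" and ev: "even p"
    and d: "distinct xs" and xK: "set xs \<in> K" and pl: "p < length xs"
  shows "cochain_eval T (take (Suc p) xs) * lbd (drop p xs) \<tau> = (\<Sum>i<length xs. (-1) ^ i * capL p T (dl i xs) \<tau>)"
proof (cases "length xs = Suc p")
  case True
  have "lbd (drop p xs) \<tau> = 0" unfolding lbd_def using True by simp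
  moreover have "capL p T (dl i xs) \<tau> = 0" if "i < length xs" for i
    unfolding capL_def using that True by simp
  ultimately show ?thesis by simp
next
  case False
  define q where "q = length xs - Suc p"
  have q1: "1 \<le> q" and n: "length xs = Suc p + q" using False pl unfolding q_def by auto
  define ys where "ys = take (Suc (Suc p)) xs"
  have lys: "length ys = p + 2" unfolding ys_def using n q1 by simp
  have dys: "distinct ys" unfolding ys_def using d by simp
  have ysK: "set ys \<in> K"
  proof (rule sc_face[OF K xK])
    show "set ys \<subseteq> set xs" unfolding ys_def by (rule set_take_subset)
    show "set ys \<noteq> {}" using lys by auto
  qed
  have coc': "(\<Sum>i<Suc p + 1. (-1) ^ i * cochain_eval T (dl i ys)) = 0"
    using cocycle_list[OF K dys ysK lys coc] lys by simp
  have dl_last: "dl (Suc p) ys = take (Suc p) xs" unfolding dl_def ys_def using n q1 by (simp add: min_def)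
  have part1: "(\<Sum>i<Suc p. (-1) ^ i * cochain_eval T (dl i ys)) = cochain_eval T (take (Suc p) xs)"
    using coc' ev unfolding dl_last[symmetric] by simp
  have A: "capL p T (dl i xs) \<tau> = cochain_eval T (dl i ys) * osimp (drop (Suc p) xs) \<tau>" if "i < Suc p" for i
  proof -
    have "take (Suc p) (dl i xs) = dl i ys" unfolding dl_def ys_def using that n
      by (simp add: take_drop min_def)
    moreover have "drop p (dl i xs) = drop (Suc p) xs" unfolding dl_def using that n
      by (simp add: min_def)
    moreover have "p < length (dl i xs)" using that n q1 by simp
    ultimately show ?thesis unfolding capL_def by simp
  qed
  have B: "capL p T (dl (Suc p + j) xs) \<tau> = cochain_eval T (take (Suc p) xs) * osimp (dl (Suc j) (drop p xs)) \<tau>" if "j < q" for j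
  proof -
    have "take (Suc p) (dl (Suc p + j) xs) = take (Suc p) xs" unfolding dl_def using that n
      by (simp add: min_def)
    moreover have "drop p (dl (Suc p + j) xs) = dl (Suc j) (drop p xs)" unfolding dl_def using that n
      by (simp add: min_def drop_take add.commute)
    moreover have "p < length (dl (Suc p + j) xs)" using that n q1 by simp
    ultimately show ?thesis unfolding capL_def by simp
  qed
  have "(\<Sum>i<length xs. (-1) ^ i * capL p T (dl i xs) \<tau>) =
      (\<Sum>i<Suc p. (-1) ^ i * capL p T (dl i xs) \<tau>) + (\<Sum>j<q. (-1) ^ (Suc p + j) * capL p T (dl (Suc p + j) xs) \<tau>)"
    unfolding n by (rule sum_lt_add)
  also have "(\<Sum>i<Suc p. (-1) ^ i * capL p T (dl i xs) \<tau>) = cochain_eval T (take (Suc p) xs) * osimp (drop (Suc p) xs) \<tau>"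
  proof -
    have "(\<Sum>i<Suc p. (-1) ^ i * capL p T (dl i xs) \<tau>) = (\<Sum>i<Suc p. ((-1) ^ i * cochain_eval T (dl i ys)) * osimp (drop (Suc p) xs) \<tau>)"
      by (intro sum.cong) (simp_all add: A mult.assoc)
    also have "\<dots> = (\<Sum>i<Suc p. (-1) ^ i * cochain_eval T (dl i ys)) * osimp (drop (Suc p) xs) \<tau>"
      by (rule sum_distrib_right[symmetric])
    finally show ?thesis unfolding part1 .
  qed
  also have "(\<Sum>j<q. (-1) ^ (Suc p + j) * capL p T (dl (Suc p + j) xs) \<tau>) =
      cochain_eval T (take (Suc p) xs) * (\<Sum>j<q. (-1) ^ Suc j * osimp (dl (Suc j) (drop p xs)) \<tau>)"
    using B ev unfolding sum_distrib_left by (intro sum.cong) (auto simp: power_add)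
  also have "cochain_eval T (take (Suc p) xs) * osimp (drop (Suc p) xs) \<tau> + \<dots> =
      cochain_eval T (take (Suc p) xs) * lbd (drop p xs) \<tau>"
  proof -
    have "lbd (drop p xs) \<tau> = (\<Sum>j<Suc q. (-1) ^ j * osimp (dl j (drop p xs)) \<tau>)"
      unfolding lbd_def using n q1 by simp
    also have "\<dots> = osimp (drop (Suc p) xs) \<tau> + (\<Sum>j<q. (-1) ^ Suc j * osimp (dl (Suc j) (drop p xs)) \<tau>)"
      unfolding sum.lessThan_Suc_shift by (simp add: dl_def)
    finally show ?thesis by (simp add: distrib_left)
  qed
  finally show ?thesis ..
qed





lemma good_up: "good_ordering K L R \<Longrightarrow> v \<in> \<Union>L \<Longrightarrow> w \<in> \<Union>K \<Longrightarrow> R v w \<Longrightarrow> w \<in> \<Union>L"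
  unfolding good_ordering_def by blast
lemma good_ord: "good_ordering K L R \<Longrightarrow> ordering K R"
  unfolding good_ordering_def by blast
lemma full_in: "full_subcomplex L K \<Longrightarrow> \<sigma> \<in> K \<Longrightarrow> \<sigma> \<subseteq> \<Union>L \<Longrightarrow> \<sigma> \<in> L"
  unfolding full_subcomplex_def by blast
lemma full_sub: "full_subcomplex L K \<Longrightarrow> L \<subseteq> K"
  unfolding full_subcomplex_def subcomplex_def by blast
lemma relco: "rel_cochain K (Wcomplex K L) p T \<Longrightarrow> T \<sigma> \<noteq> 0 \<Longrightarrow> \<sigma> \<in> K \<and> card \<sigma> = Suc p \<and> \<sigma> \<inter> \<Union>L \<noteq> {}"
  unfolding rel_cochain_def Wcomplex_def by blast

lemma bd_scale: "bd K (\<lambda>\<tau>. c * f \<tau>) \<tau> = c * bd K f \<tau>"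
  unfolding bd_def sum_distrib_left by (simp add: mult.assoc)

lemma olist_ne: "simplicial_complex K \<Longrightarrow> ordering K R \<Longrightarrow> \<sigma> \<in> K \<Longrightarrow> olist R \<sigma> \<noteq> []"
  using olist_props sc_ne by fastforce

lemma cap_rhs:
  fixes \<sigma> :: "'v::linorder set"
  assumes K: "simplicial_complex K" and R: "ordering K R" and s: "\<sigma> \<in> K"
  shows "(\<Sum>\<rho>\<in>K. incid \<sigma> \<rho> * cap_simplex p R T \<rho> \<tau>) =
    (-1) ^ inv_count (olist R \<sigma>) * (\<Sum>i<length (olist R \<sigma>). (-1) ^ i * capL p T (dl i (olist R \<sigma>)) \<tau>)"
proof -
  define xs where "xs = olist R \<sigma>"
  have xs: "set xs = \<sigma>" "distinct xs" "sorted_wrt R xs" using olist_props[OF K R s] unfolding xs_def by auto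
  have ne: "xs \<noteq> []" using olist_ne[OF K R s] unfolding xs_def .
  show ?thesis
  proof (cases "2 \<le> length xs")
    case l: True
    have xK: "set xs \<in> K" using xs s by simp
    have "(\<Sum>\<rho>\<in>K. incid \<sigma> \<rho> * cap_simplex p R T \<rho> \<tau>) =
       (\<Sum>i<length xs. (-1) ^ (inv_count xs + i + inv_count (dl i xs)) * cap_simplex p R T (set (dl i xs)) \<tau>)"
      using bd_list[OF K xs(2) xK l, of "\<lambda>\<rho>. cap_simplex p R T \<rho> \<tau>"] xs(1) by simp
    also have "\<dots> = (\<Sum>i<length xs. (-1) ^ inv_count xs * ((-1) ^ i * capL p T (dl i xs) \<tau>))"
    proof (rule sum.cong)
      fix i assume i: "i \<in> {..<length xs}"
      have dK: "set (dl i xs) \<in> K"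
        using sc_face[OF K xK] set_dl[OF xs(2)] set_dl_ne[OF xs(2) _ l] i by auto
      have "cap_simplex p R T (set (dl i xs)) \<tau> = (-1) ^ inv_count (dl i xs) * capL p T (dl i xs) \<tau>"
        using capS_sorted[OF K R dK distinct_dl[OF xs(2)] sorted_wrt_dl[OF xs(3)]] .
      then show "(-1) ^ (inv_count xs + i + inv_count (dl i xs)) * cap_simplex p R T (set (dl i xs)) \<tau> =
         (-1) ^ inv_count xs * ((-1) ^ i * capL p T (dl i xs) \<tau>)"
        by (simp add: power_add)
    qed simp
    finally show ?thesis unfolding xs_def[symmetric] by (simp add: sum_distrib_left)
  next
    case False
    then obtain x where x: "xs = [x]" using ne by (cases xs) (auto simp: Suc_le_eq)
    have "(\<Sum>\<rho>\<in>K. incid \<sigma> \<rho> * cap_simplex p R T \<rho> \<tau>) = 0"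
    proof -
      have "\<sigma> = {x}" using xs(1) x by simp
      then show ?thesis by (simp add: incid_single)
    qed
    moreover have "capL p T (dl 0 [x]) \<tau> = 0" unfolding capL_def dl_def by simp
    ultimately show ?thesis unfolding xs_def[symmetric] x by simp
  qed
qed

lemma cap_chain:
  fixes \<sigma> :: "'v::linorder set"
  assumes K: "simplicial_complex K" and R: "ordering K R" and coc: "cocycle K p T" and ev: "even p"
    and s: "\<sigma> \<in> K"
  shows "bd K (cap_simplex p R T \<sigma>) \<tau> = (\<Sum>\<rho>\<in>K. incid \<sigma> \<rho> * cap_simplex p R T \<rho> \<tau>)"
proof -
  define xs where "xs = olist R \<sigma>"
  have xs: "set xs = \<sigma>" "distinct xs" "sorted_wrt R xs" using olist_props[OF K R s] unfolding xs_def by auto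
  have xK: "set xs \<in> K" using xs s by simp
  have cs: "cap_simplex p R T \<sigma> = (\<lambda>\<tau>. (-1) ^ inv_count xs * capL p T xs \<tau>)"
    unfolding xs_def by (rule ext) (rule capS_eq)
  have "bd K (cap_simplex p R T \<sigma>) \<tau> = (-1) ^ inv_count xs * (\<Sum>i<length xs. (-1) ^ i * capL p T (dl i xs) \<tau>)"
  proof (cases "p < length xs")
    case True
    have dK: "set (drop p xs) \<in> K"
      using sc_face[OF K xK] True by (auto simp: set_drop_subset)
    have "cap_simplex p R T \<sigma> = (\<lambda>\<tau>. ((-1) ^ inv_count xs * cochain_eval T (take (Suc p) xs)) * osimp (drop p xs) \<tau>)"
      unfolding cs capL_def using True by (simp add: mult.assoc)
    then have "bd K (cap_simplex p R T \<sigma>) \<tau> = ((-1) ^ inv_count xs * cochain_eval T (take (Suc p) xs)) * lbd (drop p xs) \<tau>"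
      using bd_scale bd_osimp_lbd[OF K distinct_drop[OF xs(2)] dK] by metis
    then show ?thesis using hatcher[OF K coc ev xs(2) xK True] by (simp add: mult.assoc)
  next
    case False
    have "cap_simplex p R T \<sigma> = (\<lambda>\<tau>. 0 * 0)" unfolding cs capL_def using False by simp
    then have "bd K (cap_simplex p R T \<sigma>) \<tau> = 0" using bd_scale[of K 0 "\<lambda>_. 0"] by simp
    moreover have "capL p T (dl i xs) \<tau> = 0" if "i < length xs" for i
      unfolding capL_def using False that by auto
    ultimately show ?thesis by simp
  qed
  then show ?thesis using cap_rhs[OF K R s] unfolding xs_def by simp
qed

lemma cap_support:
  fixes \<sigma> :: "'v::linorder set"
  assumes K: "simplicial_complex K" and R: "good_ordering K L R" and F: "full_subcomplex L K"
    and T: "rel_cochain K (Wcomplex K L) p T" and s: "\<sigma> \<in> K"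
    and nz: "cap_simplex p R T \<sigma> \<tau> \<noteq> 0"
  shows "\<tau> \<subseteq> \<sigma> \<and> \<tau> \<subseteq> \<Union>L \<and> \<tau> \<in> L \<and> card \<tau> + p = card \<sigma>"
proof -
  have Ro: "ordering K R" using good_ord[OF R] .
  define xs where "xs = olist R \<sigma>"
  have xs: "set xs = \<sigma>" "distinct xs" "sorted_wrt R xs" using olist_props[OF K Ro s] unfolding xs_def by auto
  have nz2: "capL p T xs \<tau> \<noteq> 0" using nz unfolding capS_eq xs_def by simp
  then have pl: "p < length xs" and Tnz: "T (set (take (Suc p) xs)) \<noteq> 0" and tau: "\<tau> = set (drop p xs)"
    unfolding capL_def cochain_eval_def osimp_def by (auto split: if_splits)
  obtain a where a: "a \<in> set (take (Suc p) xs)" "a \<in> \<Union>L" using relco[OF T Tnz] by blast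
  obtain i where i: "i < Suc p" "i < length xs" "xs ! i = a" using a(1) by (auto simp: in_set_conv_nth)
  have sub: "\<tau> \<subseteq> \<Union>L"
  proof
    fix b assume "b \<in> \<tau>"
    then obtain k where k: "k < length xs - p" "b = xs ! (p + k)" unfolding tau by (auto simp: in_set_conv_nth)
    then obtain j where j: "j < length xs" "p \<le> j" "xs ! j = b" by (intro that[of "p + k"]) auto
    show "b \<in> \<Union>L"
    proof (cases "i = j")
      case True then show ?thesis using i j a by simp
    next
      case False
      then have "i < j" using i j by simp
      then have "R (xs ! i) (xs ! j)" using sorted_wrt_nth_less[OF xs(3) _ j(1)] by blast
      then have "R a b" using i j by simp
      moreover have "xs ! j \<in> set xs" using j(1) by (rule nth_mem)
      then have "b \<in> \<Union>K" using j(3) xs(1) s by blast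
      ultimately show ?thesis using good_up[OF R a(2)] by simp
    qed
  qed
  have ts: "\<tau> \<subseteq> \<sigma>" unfolding tau using set_drop_subset[of p xs] xs(1) by simp
  have tne: "\<tau> \<noteq> {}" unfolding tau using pl by simp
  have tK: "\<tau> \<in> K" using sc_face[OF K s ts tne] .
  have cs: "card \<sigma> = length xs" using distinct_card[OF xs(2)] xs(1) by simp
  have "card \<tau> + p = card \<sigma>" unfolding tau cs using xs(2) pl by (simp add: distinct_card)
  then show ?thesis using ts sub full_in[OF F tK sub] by blast
qed





definition ext :: "'v set set \<Rightarrow> ('v set \<Rightarrow> 'v set \<Rightarrow> rat) \<Rightarrow> ('v set \<Rightarrow> rat) \<Rightarrow> ('v set \<Rightarrow> rat)" where
  "ext K F c = (\<lambda>\<tau>. \<Sum>\<sigma>\<in>K. c \<sigma> * F \<sigma> \<tau>)"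

lemma bd_ext: "bd K c = ext K incid c"
  unfolding bd_def ext_def ..

lemma cap_ext: "cap K p R T c = ext K (cap_simplex p R T) c"
  unfolding cap_def ext_def ..

lemma ext_comp: "ext K F (ext K G c) = ext K (\<lambda>\<sigma>. ext K F (G \<sigma>)) c"
proof
  fix \<tau>
  have "ext K F (ext K G c) \<tau> = (\<Sum>\<rho>\<in>K. \<Sum>\<sigma>\<in>K. c \<sigma> * G \<sigma> \<rho> * F \<rho> \<tau>)"
    unfolding ext_def sum_distrib_right ..
  also have "\<dots> = (\<Sum>\<sigma>\<in>K. \<Sum>\<rho>\<in>K. c \<sigma> * G \<sigma> \<rho> * F \<rho> \<tau>)" by (rule sum.swap)
  also have "\<dots> = ext K (\<lambda>\<sigma>. ext K F (G \<sigma>)) c \<tau>"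
    unfolding ext_def sum_distrib_left by (simp add: mult.assoc)
  finally show "ext K F (ext K G c) \<tau> = ext K (\<lambda>\<sigma>. ext K F (G \<sigma>)) c \<tau>" .
qed

lemma ext_cong: "(\<And>\<sigma>. \<sigma> \<in> K \<Longrightarrow> c \<sigma> \<noteq> 0 \<Longrightarrow> F \<sigma> = G \<sigma>) \<Longrightarrow> ext K F c = ext K G c"
proof -
  assume h: "\<And>\<sigma>. \<sigma> \<in> K \<Longrightarrow> c \<sigma> \<noteq> 0 \<Longrightarrow> F \<sigma> = G \<sigma>"
  show ?thesis unfolding ext_def
  proof (rule ext, rule sum.cong)
    fix \<tau> \<sigma> assume "\<sigma> \<in> K"
    then show "c \<sigma> * F \<sigma> \<tau> = c \<sigma> * G \<sigma> \<tau>" using h by (cases "c \<sigma> = 0") auto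
  qed simp
qed

lemma ext_diff: "ext K (\<lambda>\<sigma> \<tau>. F \<sigma> \<tau> - G \<sigma> \<tau>) c \<tau> = ext K F c \<tau> - ext K G c \<tau>"
  unfolding ext_def by (simp add: right_diff_distrib sum_subtractf)

lemma ext_add: "ext K (\<lambda>\<sigma> \<tau>. F \<sigma> \<tau> + G \<sigma> \<tau>) c \<tau> = ext K F c \<tau> + ext K G c \<tau>"
  unfolding ext_def by (simp add: distrib_left sum.distrib)

lemma ext_addc: "ext K F (\<lambda>\<sigma>. a \<sigma> + b \<sigma>) \<tau> = ext K F a \<tau> + ext K F b \<tau>"
  unfolding ext_def by (simp add: distrib_right sum.distrib)

definition refs :: "'v set \<Rightarrow> 'v set \<Rightarrow> rat" where
  "refs \<rho> = (\<lambda>\<tau>. if \<tau> = \<rho> then 1 else 0)"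

lemma ext_refs:
  assumes "finite K" "\<And>\<sigma>. c \<sigma> \<noteq> 0 \<Longrightarrow> \<sigma> \<in> K"
  shows "ext K refs c = c"
proof
  fix \<tau>
  have "ext K refs c \<tau> = (\<Sum>\<sigma>\<in>K. if \<sigma> = \<tau> then c \<tau> else 0)"
    unfolding ext_def refs_def by (intro sum.cong) auto
  also have "\<dots> = c \<tau>" using assms by (cases "\<tau> \<in> K") auto
  finally show "ext K refs c \<tau> = c \<tau>" .
qed

lemma ext_refs1: "finite K \<Longrightarrow> \<rho> \<in> K \<Longrightarrow> ext K F (refs \<rho>) = F \<rho>"
proof
  fix \<tau> assume "finite K" "\<rho> \<in> K"
  have "ext K F (refs \<rho>) \<tau> = (\<Sum>\<sigma>\<in>K. if \<sigma> = \<rho> then F \<rho> \<tau> else 0)"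
    unfolding ext_def refs_def by (intro sum.cong) auto
  then show "ext K F (refs \<rho>) \<tau> = F \<rho> \<tau>" using \<open>finite K\<close> \<open>\<rho> \<in> K\<close> by simp
qed

definition cnt :: "'v::linorder \<Rightarrow> 'v set \<Rightarrow> nat" where
  "cnt x s = card {w\<in>s. w < x}"

lemma cnt_remove:
  assumes "finite s" "a \<in> s"
  shows "cnt x s = cnt x (s - {a}) + (if a < x then 1 else 0)"
proof -
  have e: "{w\<in>s - {a}. w < x} = {w\<in>s. w < x} - {a}" by auto
  have f: "finite {w\<in>s. w < x}" using assms by simp
  show ?thesis
  proof (cases "a < x")
    case True
    then have "a \<in> {w\<in>s. w < x}" using assms by simp
    then have "card {w\<in>s. w < x} = Suc (card ({w\<in>s. w < x} - {a}))" using f by (metis card_Suc_Diff1)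
    then show ?thesis unfolding cnt_def e using True by simp
  next
    case False
    then have "{w\<in>s. w < x} - {a} = {w\<in>s. w < x}" by auto
    then show ?thesis unfolding cnt_def e using False by simp
  qed
qed

lemma cnt_insert:
  assumes "finite s" "v \<notin> s"
  shows "cnt x (insert v s) = cnt x s + (if v < x then 1 else 0)"
  using cnt_remove[of "insert v s" v x] assms by simp

lemma incid_rm:
  assumes "finite s" "x \<in> s" "s - {x} \<noteq> {}"
  shows "incid s (s - {x}) = (-1) ^ cnt x s"
  using incid_remove[OF assms] unfolding cnt_def .

lemma bdbd_pair:
  fixes s :: "'v::linorder set"
  assumes f: "finite s" and a: "a \<in> s" and b: "b \<in> s" and ab: "a < b" and ne: "s - {a, b} \<noteq> {}"
  shows "incid s (s - {a}) * incid (s - {a}) (s - {a, b}) + incid s (s - {b}) * incid (s - {b}) (s - {a, b}) = 0"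
proof -
  have e1: "s - {a, b} = (s - {a}) - {b}" "s - {a, b} = (s - {b}) - {a}" by auto
  have i1: "incid s (s - {a}) = (-1) ^ cnt a s" using incid_rm[OF f a] ne by auto
  have i2: "incid s (s - {b}) = (-1) ^ cnt b s" using incid_rm[OF f b] ne by auto
  have i3: "incid (s - {a}) (s - {a, b}) = (-1) ^ cnt b (s - {a})"
    unfolding e1(1) using incid_rm[of "s - {a}" b] f b ab ne e1 by auto
  have i4: "incid (s - {b}) (s - {a, b}) = (-1) ^ cnt a (s - {b})"
    unfolding e1(2) using incid_rm[of "s - {b}" a] f a ab ne e1 by auto
  have c1: "cnt b s = cnt b (s - {a}) + 1" using cnt_remove[OF f a, of b] ab by simp
  have c2: "cnt a s = cnt a (s - {b})" using cnt_remove[OF f b, of a] ab by simp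
  show ?thesis unfolding i1 i2 i3 i4 c1 c2 by (simp add: power_add)
qed

lemma bdbd:
  fixes \<sigma> :: "'v::linorder set"
  assumes K: "simplicial_complex K" and s: "\<sigma> \<in> K"
  shows "(\<Sum>\<rho>\<in>K. incid \<sigma> \<rho> * incid \<rho> \<tau>) = 0"
proof (cases "\<exists>\<rho>\<in>K. incid \<sigma> \<rho> * incid \<rho> \<tau> \<noteq> 0")
  case False
  then show ?thesis by (intro sum.neutral) blast
next
  case True
  have fs: "finite \<sigma>" using sc_fin[OF K s] .
  have key: "\<exists>x y. x \<in> \<sigma> \<and> y \<in> \<sigma> \<and> x \<noteq> y \<and> \<rho> = \<sigma> - {x} \<and> \<tau> = \<sigma> - {x, y} \<and> \<tau> \<noteq> {}"
    if "\<rho> \<in> K" "incid \<sigma> \<rho> * incid \<rho> \<tau> \<noteq> 0" for \<rho>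
  proof -
    have n1: "incid \<sigma> \<rho> \<noteq> 0" and n2: "incid \<rho> \<tau> \<noteq> 0" using that(2) by auto
    obtain x where x: "x \<in> \<sigma>" "\<rho> = \<sigma> - {x}" using incid_nz[OF n1 fs] by blast
    have fr: "finite \<rho>" using x fs by simp
    obtain y where y: "y \<in> \<rho>" "\<tau> = \<rho> - {y}" "\<tau> \<noteq> {}" using incid_nz[OF n2 fr] by blast
    show ?thesis using x y by (intro exI[of _ x] exI[of _ y]) auto
  qed
  obtain \<rho>0 where r0: "\<rho>0 \<in> K" "incid \<sigma> \<rho>0 * incid \<rho>0 \<tau> \<noteq> 0" using True by blast
  obtain a b where ab: "a \<in> \<sigma>" "b \<in> \<sigma>" "a \<noteq> b" "\<tau> = \<sigma> - {a, b}" "\<tau> \<noteq> {}"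
    using key[OF r0] by blast
  have in_ab: "\<rho> \<in> {\<sigma> - {a}, \<sigma> - {b}}" if r: "\<rho> \<in> K" "incid \<sigma> \<rho> * incid \<rho> \<tau> \<noteq> 0" for \<rho>
  proof -
    obtain x y where xy: "x \<in> \<sigma>" "y \<in> \<sigma>" "x \<noteq> y" "\<rho> = \<sigma> - {x}" "\<tau> = \<sigma> - {x, y}"
      using key[OF r] by blast
    have "{x, y} = \<sigma> - \<tau>" using xy by auto
    moreover have "{a, b} = \<sigma> - \<tau>" using ab by auto
    ultimately have "x \<in> {a, b}" by (metis insertI1)
    then have "x = a \<or> x = b" by simp
    then show ?thesis using xy by auto
  qed
  have "\<sigma> - {a} \<in> K" by (rule sc_face[OF K s]) (use ab in auto)
  moreover have "\<sigma> - {b} \<in> K" by (rule sc_face[OF K s]) (use ab in auto)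
  ultimately have sub: "{\<sigma> - {a}, \<sigma> - {b}} \<subseteq> K" by simp
  have "(\<Sum>\<rho>\<in>K. incid \<sigma> \<rho> * incid \<rho> \<tau>) = (\<Sum>\<rho>\<in>{\<sigma> - {a}, \<sigma> - {b}}. incid \<sigma> \<rho> * incid \<rho> \<tau>)"
  proof (rule sum.mono_neutral_right)
    show "finite K" using sc_finK[OF K] .
    show "{\<sigma> - {a}, \<sigma> - {b}} \<subseteq> K" using sub .
    show "\<forall>\<rho>\<in>K - {\<sigma> - {a}, \<sigma> - {b}}. incid \<sigma> \<rho> * incid \<rho> \<tau> = 0" using in_ab by blast
  qed
  also have "\<dots> = incid \<sigma> (\<sigma> - {a}) * incid (\<sigma> - {a}) \<tau> + incid \<sigma> (\<sigma> - {b}) * incid (\<sigma> - {b}) \<tau>"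
  proof -
    have "\<sigma> - {a} \<noteq> \<sigma> - {b}" using ab by auto
    then show ?thesis by simp
  qed
  also have "\<dots> = 0"
  proof (cases "a < b")
    case True
    then show ?thesis using bdbd_pair[OF fs ab(1,2) True] ab(4,5) by simp
  next
    case False
    then have "b < a" using ab(3) by auto
    moreover have "\<sigma> - {b, a} = \<tau>" using ab by auto
    ultimately show ?thesis using bdbd_pair[OF fs ab(2,1)] ab(5) by simp
  qed
  finally show ?thesis .
qed





definition cone :: "'v::linorder \<Rightarrow> ('v set \<Rightarrow> rat) \<Rightarrow> ('v set \<Rightarrow> rat)" where
  "cone v z = (\<lambda>\<tau>. if v \<in> \<tau> \<and> \<tau> - {v} \<noteq> {} then (-1) ^ cnt v \<tau> * z (\<tau> - {v}) else 0)"

lemma cnt_ins_self: "cnt v (insert v S) = cnt v S"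
  unfolding cnt_def by (rule arg_cong[where f=card]) auto

lemma cone_refs:
  "cone v (refs \<rho>) = (\<lambda>\<sigma>. if v \<notin> \<rho> \<and> \<rho> \<noteq> {} \<and> \<sigma> = insert v \<rho> then (-1) ^ cnt v \<rho> else 0)"
proof
  fix \<sigma>
  show "cone v (refs \<rho>) \<sigma> = (if v \<notin> \<rho> \<and> \<rho> \<noteq> {} \<and> \<sigma> = insert v \<rho> then (-1) ^ cnt v \<rho> else 0)"
  proof (cases "v \<in> \<sigma> \<and> \<sigma> - {v} = \<rho> \<and> \<rho> \<noteq> {}")
    case True
    then have "\<sigma> = insert v \<rho>" "v \<notin> \<rho>" by auto
    then show ?thesis unfolding cone_def refs_def using True by (auto simp: cnt_ins_self)
  next
    case False
    have "\<not> (v \<notin> \<rho> \<and> \<rho> \<noteq> {} \<and> \<sigma> = insert v \<rho>)" using False by auto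
    then show ?thesis unfolding cone_def refs_def using False by auto
  qed
qed

lemma bd_cone_refs:
  assumes "finite K" "v \<notin> \<rho> \<Longrightarrow> \<rho> \<noteq> {} \<Longrightarrow> insert v \<rho> \<in> K"
  shows "bd K (cone v (refs \<rho>)) \<tau> = (if v \<notin> \<rho> \<and> \<rho> \<noteq> {} then (-1) ^ cnt v \<rho> * incid (insert v \<rho>) \<tau> else 0)"
proof -
  have "bd K (cone v (refs \<rho>)) \<tau> = (\<Sum>\<sigma>\<in>K. if \<sigma> = insert v \<rho> then (if v \<notin> \<rho> \<and> \<rho> \<noteq> {} then (-1) ^ cnt v \<rho> * incid (insert v \<rho>) \<tau> else 0) else 0)"
    unfolding bd_def cone_refs by (intro sum.cong) auto
  also have "\<dots> = (if v \<notin> \<rho> \<and> \<rho> \<noteq> {} then (-1) ^ cnt v \<rho> * incid (insert v \<rho>) \<tau> else 0)"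
    using assms by (cases "v \<notin> \<rho> \<and> \<rho> \<noteq> {}") auto
  finally show ?thesis .
qed

lemma cone_basis:
  fixes \<rho> :: "'v::linorder set"
  assumes fin: "finite \<rho>" and ne: "\<rho> \<noteq> {}"
  shows "(if v \<notin> \<rho> then (-1) ^ cnt v \<rho> * incid (insert v \<rho>) \<tau> else 0) + cone v (incid \<rho>) \<tau>
     = refs \<rho> \<tau> - (if card \<rho> = 1 \<and> \<tau> = {v} then 1 else 0)"
proof (cases "v \<in> \<rho>")
  case vr: True
  show ?thesis
  proof (cases "\<tau> = \<rho>")
    case True
    show ?thesis
    proof (cases "\<rho> - {v} = {}")
      case True
      then have "\<rho> = {v}" using vr by auto
      then show ?thesis using \<open>\<tau> = \<rho>\<close> unfolding cone_def refs_def by simp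
    next
      case False
      have c: "card \<rho> \<noteq> 1"
      proof
        assume "card \<rho> = 1"
        then obtain x where "\<rho> = {x}" by (rule card_1_singletonE)
        then show False using False vr by auto
      qed
      have "cone v (incid \<rho>) \<tau> = 1" unfolding cone_def using True False vr incid_rm[OF fin vr False] by simp
      then show ?thesis using vr c True unfolding refs_def by simp
    qed
  next
    case False
    have "cone v (incid \<rho>) \<tau> = 0"
    proof (rule ccontr)
      assume nz: "cone v (incid \<rho>) \<tau> \<noteq> 0"
      then have vt: "v \<in> \<tau>" and "incid \<rho> (\<tau> - {v}) \<noteq> 0" unfolding cone_def by (auto split: if_splits)
      then obtain x where x: "x \<in> \<rho>" "\<tau> - {v} = \<rho> - {x}" using incid_nz[OF _ fin] by blast
      show False
      proof (cases "x = v")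
        case True then have "\<tau> = \<rho>" using x vt vr by blast
        then show False using False by simp
      next
        case xv: False then have "v \<in> \<rho> - {x}" using vr by simp
        then show False using x by auto
      qed
    qed
    moreover have "\<not> (card \<rho> = 1 \<and> \<tau> = {v})" using False vr by (auto simp: card_1_singleton_iff)
    ultimately show ?thesis using vr False unfolding refs_def by simp
  qed
next
  case vr: False
  define I where "I = insert v \<rho>"
  have fI: "finite I" unfolding I_def using fin by simp
  have cI: "cnt a I = cnt a \<rho> + (if v < a then 1 else 0)" for a unfolding I_def using cnt_insert[OF fin vr] .
  show ?thesis
  proof (cases "\<tau> = \<rho>")
    case True
    have "incid I \<tau> = (-1) ^ cnt v I"
      using incid_rm[OF fI, of v] ne vr True unfolding I_def by auto
    then have "incid I \<tau> = (-1) ^ cnt v \<rho>" using cI[of v] by simp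
    moreover have "cone v (incid \<rho>) \<tau> = 0" unfolding cone_def using True vr by simp
    ultimately show ?thesis using True vr unfolding refs_def I_def by auto
  next
    case tr: False
    show ?thesis
    proof (cases "v \<in> \<tau> \<and> \<tau> - {v} \<noteq> {}")
      case vt: True
      show ?thesis
      proof (cases "\<exists>a\<in>\<rho>. \<tau> = insert v (\<rho> - {a})")
        case True
        then obtain a where a: "a \<in> \<rho>" "\<tau> = insert v (\<rho> - {a})" by blast
        have av: "a \<noteq> v" using a vr by auto
        have tI: "\<tau> = I - {a}" unfolding I_def using a av vr by auto
        have aI: "a \<in> I" unfolding I_def using a by simp
        have "incid I (I - {a}) = (-1) ^ cnt a I" by (rule incid_rm[OF fI aI]) (use vt tI in blast)
        then have i1: "incid I \<tau> = (-1) ^ (cnt a \<rho> + (if v < a then 1 else 0))"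
          by (simp add: tI[symmetric] cI)
        have tv: "\<tau> - {v} = \<rho> - {a}" using a vr by auto
        have i2: "incid \<rho> (\<tau> - {v}) = (-1) ^ cnt a \<rho>" unfolding tv using incid_rm[OF fin a(1)] vt tv by simp
        have c3: "cnt v \<tau> = cnt v (\<rho> - {a})" unfolding a(2) by (rule cnt_ins_self)
        have c4: "cnt v \<rho> = cnt v (\<rho> - {a}) + (if a < v then 1 else 0)" using cnt_remove[OF fin a(1)] .
        have cv: "cone v (incid \<rho>) \<tau> = (-1) ^ cnt v \<tau> * incid \<rho> (\<tau> - {v})"
          unfolding cone_def using vt by simp
        have "(-1) ^ cnt v \<rho> * incid I \<tau> + cone v (incid \<rho>) \<tau> = 0"
          unfolding cv i1 i2 c3 c4 using av
          by (cases "a < v") (auto simp: power_add)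
        moreover have "refs \<rho> \<tau> = 0" using tr unfolding refs_def by simp
        moreover have "\<tau> \<noteq> {v}" using vt by auto
        ultimately show ?thesis using vr unfolding I_def by simp
      next
        case False
        have "incid I \<tau> = 0"
        proof (rule ccontr)
          assume "incid I \<tau> \<noteq> 0"
          then obtain x where x: "x \<in> I" "\<tau> = I - {x}" using incid_nz[OF _ fI] by blast
          show False
          proof (cases "x = v")
            case True then have "\<tau> = \<rho>" using x vr unfolding I_def by auto
            then show False using tr by simp
          next
            case xv: False
            then have "x \<in> \<rho>" "\<tau> = insert v (\<rho> - {x})" using x unfolding I_def by auto
            then show False using False by blast
          qed
        qed
        moreover have "cone v (incid \<rho>) \<tau> = 0"
        proof (rule ccontr)
          assume "cone v (incid \<rho>) \<tau> \<noteq> 0"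
          then have "incid \<rho> (\<tau> - {v}) \<noteq> 0" unfolding cone_def by (auto split: if_splits)
          then obtain a where a: "a \<in> \<rho>" "\<tau> - {v} = \<rho> - {a}" using incid_nz[OF _ fin] by blast
          then have "\<tau> = insert v (\<rho> - {a})" using vt by blast
          then show False using False a by blast
        qed
        moreover have "refs \<rho> \<tau> = 0" using tr unfolding refs_def by simp
        moreover have "\<tau> \<noteq> {v}" using vt by auto
        ultimately show ?thesis using vr unfolding I_def by simp
      qed
    next
      case nvt: False
      have c0: "cone v (incid \<rho>) \<tau> = 0" unfolding cone_def using nvt by auto
      show ?thesis
      proof (cases "\<exists>x\<in>\<rho>. \<rho> = {x} \<and> \<tau> = {v}")
        case True
        then obtain x where x: "x \<in> \<rho>" "\<rho> = {x}" "\<tau> = {v}" by blast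
        have xv: "x \<noteq> v" using x vr by auto
        have tI: "\<tau> = I - {x}" unfolding I_def using x xv by auto
        have "incid I \<tau> = (-1) ^ cnt x I" unfolding tI using incid_rm[OF fI, of x] x tI unfolding I_def by auto
        moreover have "cnt x I = (if v < x then 1 else 0)"
        proof -
          have e: "{w\<in>\<rho>. w < x} = {}" using x by auto
          have "cnt x \<rho> = 0" unfolding cnt_def by (simp only: e card.empty)
          then show ?thesis using cI[of x] by simp
        qed
        moreover have "cnt v \<rho> = (if x < v then 1 else 0)"
        proof -
          have "{w\<in>\<rho>. w < v} = (if x < v then {x} else {})" using x by auto
          then show ?thesis unfolding cnt_def by simp
        qed
        ultimately have "(-1) ^ cnt v \<rho> * incid I \<tau> = -1" using xv by (cases "x < v") auto
        then show ?thesis using c0 vr x xv unfolding I_def refs_def by auto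
      next
        case False
        have "incid I \<tau> = 0"
        proof (rule ccontr)
          assume "incid I \<tau> \<noteq> 0"
          then obtain x where x: "x \<in> I" "\<tau> = I - {x}" "\<tau> \<noteq> {}" using incid_nz[OF _ fI] by blast
          show False
          proof (cases "x = v")
            case True then have "\<tau> = \<rho>" using x vr unfolding I_def by auto
            then show False using tr by simp
          next
            case xv: False
            have xr: "x \<in> \<rho>" using x(1) xv unfolding I_def by blast
            have vt: "v \<in> \<tau>" using x(2) xv unfolding I_def by blast
            have "\<tau> - {v} = {}" using nvt vt by blast
            moreover have "\<rho> - {x} \<subseteq> \<tau> - {v}"
            proof
              fix w assume w: "w \<in> \<rho> - {x}"
              then have "w \<in> I" "w \<noteq> x" "w \<noteq> v" unfolding I_def using vr by auto
              then show "w \<in> \<tau> - {v}" using x(2) by blast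
            qed
            ultimately have "\<rho> - {x} = {}" by blast
            then have "\<rho> = {x}" using xr by blast
            moreover have "\<tau> = {v}" using \<open>\<tau> - {v} = {}\<close> vt by blast
            ultimately show False using False xr by blast
          qed
        qed
        moreover have "\<not> (card \<rho> = 1 \<and> \<tau> = {v})"
        proof
          assume "card \<rho> = 1 \<and> \<tau> = {v}"
          then obtain x where "\<rho> = {x}" "\<tau> = {v}" by (auto simp: card_1_singleton_iff)
          then show False using False by auto
        qed
        ultimately show ?thesis using c0 vr tr unfolding I_def refs_def by simp
      qed
    qed
  qed
qed

lemma cone_ext: "cone v (ext K G c) = ext K (\<lambda>\<sigma>. cone v (G \<sigma>)) c"
proof
  fix \<tau>
  show "cone v (ext K G c) \<tau> = ext K (\<lambda>\<sigma>. cone v (G \<sigma>)) c \<tau>"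
  proof (cases "v \<in> \<tau> \<and> \<tau> - {v} \<noteq> {}")
    case True
    then show ?thesis unfolding cone_def ext_def using True
      by (simp add: sum_distrib_left mult.left_commute)
  next
    case False
    have "cone v (G \<sigma>) \<tau> = 0" for \<sigma> unfolding cone_def using False by auto
    moreover have "cone v (ext K G c) \<tau> = 0" unfolding cone_def using False by auto
    ultimately show ?thesis unfolding ext_def by simp
  qed
qed

lemma cone_identity:
  fixes v :: "'v::linorder"
  assumes K: "simplicial_complex K" and S: "S \<in> K" and vS: "v \<in> S"
    and supp: "\<And>\<rho>. z \<rho> \<noteq> 0 \<Longrightarrow> \<rho> \<subseteq> S \<and> \<rho> \<noteq> {}"
  shows "bd K (cone v z) \<tau> + cone v (bd K z) \<tau> = z \<tau> - (if \<tau> = {v} then (\<Sum>\<rho>\<in>K. if card \<rho> = 1 then z \<rho> else 0) else 0)"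
proof -
  have fK: "finite K" using sc_finK[OF K] .
  have zK: "\<rho> \<in> K" if "z \<rho> \<noteq> 0" for \<rho> using supp[OF that] sc_face[OF K S] by blast
  have z: "z = ext K refs z" using ext_refs[OF fK zK] by simp
  have e1: "bd K (cone v z) = ext K (\<lambda>\<sigma>. bd K (cone v (refs \<sigma>))) z"
    apply (subst z) unfolding cone_ext bd_ext ext_comp ..
  have e2: "cone v (bd K z) = ext K (\<lambda>\<sigma>. cone v (incid \<sigma>)) z"
    unfolding bd_ext cone_ext ..
  have "bd K (cone v z) \<tau> + cone v (bd K z) \<tau> = ext K (\<lambda>\<sigma> \<tau>. bd K (cone v (refs \<sigma>)) \<tau> + cone v (incid \<sigma>) \<tau>) z \<tau>"
    unfolding e1 e2 ext_add ..
  also have "\<dots> = ext K (\<lambda>\<sigma> \<tau>. refs \<sigma> \<tau> - (if card \<sigma> = 1 \<and> \<tau> = {v} then 1 else 0)) z \<tau>"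
  proof -
    have "ext K (\<lambda>\<sigma> \<tau>. bd K (cone v (refs \<sigma>)) \<tau> + cone v (incid \<sigma>) \<tau>) z = ext K (\<lambda>\<sigma> \<tau>. refs \<sigma> \<tau> - (if card \<sigma> = 1 \<and> \<tau> = {v} then 1 else 0)) z"
    proof (rule ext_cong)
      fix \<sigma> assume "\<sigma> \<in> K" "z \<sigma> \<noteq> 0"
      then have sS: "\<sigma> \<subseteq> S" "\<sigma> \<noteq> {}" using supp by auto
      have fs: "finite \<sigma>" using sc_fin[OF K S] sS finite_subset by blast
      have ins: "insert v \<sigma> \<in> K" by (rule sc_face[OF K S]) (use sS vS in auto)
      show "(\<lambda>\<tau>. bd K (cone v (refs \<sigma>)) \<tau> + cone v (incid \<sigma>) \<tau>) = (\<lambda>\<tau>. refs \<sigma> \<tau> - (if card \<sigma> = 1 \<and> \<tau> = {v} then 1 else 0))"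
      proof
        fix \<tau>
        have "bd K (cone v (refs \<sigma>)) \<tau> = (if v \<notin> \<sigma> then (-1) ^ cnt v \<sigma> * incid (insert v \<sigma>) \<tau> else 0)"
          using bd_cone_refs[OF fK, of v \<sigma> \<tau>] ins sS by simp
        then show "bd K (cone v (refs \<sigma>)) \<tau> + cone v (incid \<sigma>) \<tau> = refs \<sigma> \<tau> - (if card \<sigma> = 1 \<and> \<tau> = {v} then 1 else 0)"
          using cone_basis[OF fs sS(2), of v \<tau>] by simp
      qed
    qed
    then show ?thesis by simp
  qed
  also have "\<dots> = ext K refs z \<tau> - ext K (\<lambda>\<sigma> \<tau>. if card \<sigma> = 1 \<and> \<tau> = {v} then 1 else 0) z \<tau>"
    by (rule ext_diff)
  also have "ext K refs z \<tau> = z \<tau>" using z by simp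
  also have "ext K (\<lambda>\<sigma> \<tau>. if card \<sigma> = 1 \<and> \<tau> = {v} then 1 else 0) z \<tau> = (if \<tau> = {v} then (\<Sum>\<rho>\<in>K. if card \<rho> = 1 then z \<rho> else 0) else 0)"
    unfolding ext_def by (cases "\<tau> = {v}") (auto intro: sum.cong)
  finally show ?thesis .
qed





fun Dh :: "'v::linorder set set \<Rightarrow> 'v set set \<Rightarrow> nat \<Rightarrow> ('v set \<Rightarrow> rat) \<Rightarrow> ('v \<Rightarrow> 'v \<Rightarrow> bool) \<Rightarrow> ('v \<Rightarrow> 'v \<Rightarrow> bool) \<Rightarrow> nat \<Rightarrow> 'v set \<Rightarrow> 'v set \<Rightarrow> rat" where
  "Dh K L p T R1 R2 0 = (\<lambda>\<sigma> \<tau>. 0)"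
| "Dh K L p T R1 R2 (Suc n) = (\<lambda>\<sigma>. cone (Min (\<sigma> \<inter> \<Union>L))
      (\<lambda>\<tau>. cap_simplex p R1 T \<sigma> \<tau> - cap_simplex p R2 T \<sigma> \<tau> - (\<Sum>\<rho>\<in>K. incid \<sigma> \<rho> * Dh K L p T R1 R2 n \<rho> \<tau>)))"

definition Dm :: "'v::linorder set set \<Rightarrow> 'v set set \<Rightarrow> nat \<Rightarrow> ('v set \<Rightarrow> rat) \<Rightarrow> ('v \<Rightarrow> 'v \<Rightarrow> bool) \<Rightarrow> ('v \<Rightarrow> 'v \<Rightarrow> bool) \<Rightarrow> 'v set \<Rightarrow> 'v set \<Rightarrow> rat" where
  "Dm K L p T R1 R2 \<sigma> = Dh K L p T R1 R2 (card \<sigma>) \<sigma>"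

lemma cone_zero: "cone v (\<lambda>_. 0) = (\<lambda>_. 0)"
  unfolding cone_def by auto

lemma incid_card: "incid s r \<noteq> 0 \<Longrightarrow> finite s \<Longrightarrow> card s = Suc (card r)"
  unfolding incid_def by (auto split: if_splits)

lemma capS_small:
  assumes K: "simplicial_complex K" and R: "ordering K R" and s: "\<sigma> \<in> K" and c: "card \<sigma> \<le> p"
  shows "cap_simplex p R T \<sigma> \<tau> = 0"
proof -
  have "length (olist R \<sigma>) = card \<sigma>" using olist_props[OF K R s] distinct_card by metis
  then show ?thesis unfolding capS_eq capL_def using c by simp
qed

lemma cap_aug:
  assumes K: "simplicial_complex K" and R: "ordering K R" and s: "\<sigma> \<in> K" and c: "card \<sigma> = Suc p"
  shows "(\<Sum>\<rho>\<in>K. cap_simplex p R T \<sigma> \<rho>) = T \<sigma>"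
proof -
  define xs where "xs = olist R \<sigma>"
  have xs: "set xs = \<sigma>" "distinct xs" using olist_props[OF K R s] unfolding xs_def by auto
  have l: "length xs = Suc p" using xs c distinct_card by metis
  have tk: "take (Suc p) xs = xs" using l by simp
  have dr: "drop p xs = [xs ! p]" using l Cons_nth_drop_Suc[of p xs] by simp
  have xK: "{xs ! p} \<in> K" by (rule sc_face[OF K s]) (use xs l in auto)
  have "cap_simplex p R T \<sigma> \<rho> = (if \<rho> = {xs ! p} then (-1) ^ inv_count xs * cochain_eval T xs else 0)" for \<rho>
    unfolding capS_eq xs_def[symmetric] capL_def osimp_def tk dr using l by (simp add: inv_count_invr)
  then have "(\<Sum>\<rho>\<in>K. cap_simplex p R T \<sigma> \<rho>) = (-1) ^ inv_count xs * cochain_eval T xs"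
    using xK sc_finK[OF K] by simp
  also have "\<dots> = T \<sigma>" unfolding cochain_eval_def xs(1) by (simp add: mult.assoc[symmetric])
  finally show ?thesis .
qed

locale homot =
  fixes K L :: "'v::linorder set set" and p :: nat and T :: "'v set \<Rightarrow> rat" and R1 R2 :: "'v \<Rightarrow> 'v \<Rightarrow> bool"
  assumes K: "simplicial_complex K" and F: "full_subcomplex L K" and ev: "even p"
    and Tc: "rel_cochain K (Wcomplex K L) p T" and coc: "cocycle K p T"
    and G1: "good_ordering K L R1" and G2: "good_ordering K L R2"
begin

abbreviation "f \<equiv> cap_simplex p R1 T"
abbreviation "g \<equiv> cap_simplex p R2 T"
abbreviation "D \<equiv> Dm K L p T R1 R2"

definition zz :: "'v set \<Rightarrow> 'v set \<Rightarrow> rat" where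
  "zz \<sigma> = (\<lambda>\<tau>. f \<sigma> \<tau> - g \<sigma> \<tau> - ext K D (incid \<sigma>) \<tau>)"

lemma fK: "finite K" using sc_finK[OF K] .

lemma D_unfold:
  assumes s: "\<sigma> \<in> K"
  shows "D \<sigma> = cone (Min (\<sigma> \<inter> \<Union>L)) (zz \<sigma>)"
proof -
  have fs: "finite \<sigma>" using sc_fin[OF K s] .
  obtain n where n: "card \<sigma> = Suc n" using sc_ne[OF K s] fs by (cases "card \<sigma>") auto
  have "(\<Sum>\<rho>\<in>K. incid \<sigma> \<rho> * Dh K L p T R1 R2 n \<rho> \<tau>) = ext K D (incid \<sigma>) \<tau>" for \<tau>
    unfolding ext_def Dm_def
  proof (rule sum.cong)
    fix \<rho> assume "\<rho> \<in> K"
    show "incid \<sigma> \<rho> * Dh K L p T R1 R2 n \<rho> \<tau> = incid \<sigma> \<rho> * Dh K L p T R1 R2 (card \<rho>) \<rho> \<tau>"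
      using incid_card[OF _ fs, of \<rho>] n by (cases "incid \<sigma> \<rho> = 0") auto
  qed simp
  then show ?thesis unfolding Dm_def n zz_def by simp
qed

lemma ext_nz: "ext K F c \<tau> \<noteq> 0 \<Longrightarrow> \<exists>\<sigma>\<in>K. c \<sigma> \<noteq> 0 \<and> F \<sigma> \<tau> \<noteq> 0"
  unfolding ext_def by (metis (no_types, lifting) mult_zero_left mult_zero_right sum.neutral)

lemma main_ind:
  "\<forall>\<sigma>\<in>K. card \<sigma> = n \<longrightarrow>
     (\<forall>\<tau>. D \<sigma> \<tau> \<noteq> 0 \<longrightarrow> \<tau> \<subseteq> \<sigma> \<inter> \<Union>L \<and> \<tau> \<noteq> {} \<and> card \<tau> + p = Suc (card \<sigma>)) \<and>
     (card \<sigma> \<le> p \<longrightarrow> (\<forall>\<tau>. D \<sigma> \<tau> = 0)) \<and>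
     (\<forall>\<tau>. bd K (D \<sigma>) \<tau> + ext K D (incid \<sigma>) \<tau> = f \<sigma> \<tau> - g \<sigma> \<tau>)"
proof (induction n rule: less_induct)
  case (less n)
  show ?case
  proof (intro ballI impI)
    fix \<sigma> assume s: "\<sigma> \<in> K" and cn: "card \<sigma> = n"
    have fs: "finite \<sigma>" using sc_fin[OF K s] .
    have IH: "(\<forall>\<tau>. D \<rho> \<tau> \<noteq> 0 \<longrightarrow> \<tau> \<subseteq> \<rho> \<inter> \<Union>L \<and> \<tau> \<noteq> {} \<and> card \<tau> + p = Suc (card \<rho>)) \<and>
      (card \<rho> \<le> p \<longrightarrow> (\<forall>\<tau>. D \<rho> \<tau> = 0)) \<and>
      (\<forall>\<tau>. bd K (D \<rho>) \<tau> + ext K D (incid \<rho>) \<tau> = f \<rho> \<tau> - g \<rho> \<tau>)"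
      if r: "\<rho> \<in> K" "incid \<sigma> \<rho> \<noteq> 0" for \<rho>
    proof -
      have "card \<rho> < n" using incid_card[OF r(2) fs] cn by simp
      then show ?thesis using less.IH r(1) by blast
    qed
    have face: "\<rho> \<subseteq> \<sigma> \<and> card \<sigma> = Suc (card \<rho>)" if "incid \<sigma> \<rho> \<noteq> 0" for \<rho>
      using that unfolding incid_def by (auto split: if_splits)
    have zsupp: "\<tau> \<subseteq> \<sigma> \<inter> \<Union>L \<and> \<tau> \<noteq> {} \<and> card \<tau> + p = card \<sigma>" if nz: "zz \<sigma> \<tau> \<noteq> 0" for \<tau>
    proof -
      consider "f \<sigma> \<tau> \<noteq> 0" | "g \<sigma> \<tau> \<noteq> 0" | "ext K D (incid \<sigma>) \<tau> \<noteq> 0" using nz unfolding zz_def by force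
      then show ?thesis
      proof cases
        case 1 then show ?thesis using cap_support[OF K G1 F Tc s] sc_ne[OF K] full_sub[OF F] by blast
      next
        case 2 then show ?thesis using cap_support[OF K G2 F Tc s] sc_ne[OF K] full_sub[OF F] by blast
      next
        case 3
        then obtain \<rho> where r: "\<rho> \<in> K" "incid \<sigma> \<rho> \<noteq> 0" "D \<rho> \<tau> \<noteq> 0" using ext_nz by blast
        have "\<tau> \<subseteq> \<rho> \<inter> \<Union>L \<and> \<tau> \<noteq> {} \<and> card \<tau> + p = Suc (card \<rho>)" using IH[OF r(1,2)] r(3) by blast
        then show ?thesis using face[OF r(2)] by auto
      qed
    qed
    have small: "zz \<sigma> \<tau> = 0" if "card \<sigma> \<le> p" for \<tau>
    proof -
      have "f \<sigma> \<tau> = 0" "g \<sigma> \<tau> = 0" using capS_small[OF K good_ord[OF G1] s that] capS_small[OF K good_ord[OF G2] s that] by auto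
      moreover have "ext K D (incid \<sigma>) \<tau> = 0"
      proof (rule ccontr)
        assume "ext K D (incid \<sigma>) \<tau> \<noteq> 0"
        then obtain \<rho> where r: "\<rho> \<in> K" "incid \<sigma> \<rho> \<noteq> 0" "D \<rho> \<tau> \<noteq> 0" using ext_nz by blast
        have "card \<rho> \<le> p" using face[OF r(2)] that by simp
        then show False using IH[OF r(1,2)] r(3) by blast
      qed
      ultimately show ?thesis unfolding zz_def by simp
    qed
    have bdz: "bd K (zz \<sigma>) \<tau> = 0" for \<tau>
    proof -
      have b1: "bd K (f \<sigma>) \<tau> = ext K f (incid \<sigma>) \<tau>" unfolding ext_def using cap_chain[OF K good_ord[OF G1] coc ev s] .
      have b2: "bd K (g \<sigma>) \<tau> = ext K g (incid \<sigma>) \<tau>" unfolding ext_def using cap_chain[OF K good_ord[OF G2] coc ev s] .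
      have b3: "bd K (ext K D (incid \<sigma>)) \<tau> = ext K (\<lambda>\<rho> \<tau>. f \<rho> \<tau> - g \<rho> \<tau> - ext K D (incid \<rho>) \<tau>) (incid \<sigma>) \<tau>"
      proof -
        have "bd K (ext K D (incid \<sigma>)) = ext K (\<lambda>\<rho>. bd K (D \<rho>)) (incid \<sigma>)"
          unfolding bd_ext ext_comp ..
        also have "\<dots> = ext K (\<lambda>\<rho> \<tau>. f \<rho> \<tau> - g \<rho> \<tau> - ext K D (incid \<rho>) \<tau>) (incid \<sigma>)"
        proof (rule ext_cong)
          fix \<rho> assume "\<rho> \<in> K" "incid \<sigma> \<rho> \<noteq> 0"
          then show "bd K (D \<rho>) = (\<lambda>\<tau>. f \<rho> \<tau> - g \<rho> \<tau> - ext K D (incid \<rho>) \<tau>)"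
            using IH by (auto simp: algebra_simps)
        qed
        finally show ?thesis by simp
      qed
      have b4: "ext K (\<lambda>\<rho>. ext K D (incid \<rho>)) (incid \<sigma>) \<tau> = 0"
      proof -
        have e0: "ext K incid (incid \<sigma>) = (\<lambda>_. 0)"
          unfolding ext_def using bdbd[OF K s] by simp
        have "ext K (\<lambda>\<rho>. ext K D (incid \<rho>)) (incid \<sigma>) \<tau> = ext K D (ext K incid (incid \<sigma>)) \<tau>"
          by (simp only: ext_comp)
        also have "\<dots> = 0" unfolding e0 by (simp add: ext_def)
        finally show ?thesis .
      qed
      have "bd K (zz \<sigma>) \<tau> = bd K (f \<sigma>) \<tau> - bd K (g \<sigma>) \<tau> - bd K (ext K D (incid \<sigma>)) \<tau>"
        unfolding zz_def bd_def by (simp add: sum_subtractf left_diff_distrib)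
      also have "\<dots> = 0" unfolding b1 b2 b3 ext_diff using b4 by simp
      finally show ?thesis .
    qed
    have aug: "(\<Sum>\<rho>\<in>K. if card \<rho> = 1 then zz \<sigma> \<rho> else 0) = 0"
    proof (cases "card \<sigma> = Suc p")
      case False
      have "(if card \<rho> = 1 then zz \<sigma> \<rho> else 0) = 0" for \<rho>
        using zsupp[of \<rho>] False by (cases "zz \<sigma> \<rho> = 0") auto
      then show ?thesis by simp
    next
      case True
      have e: "ext K D (incid \<sigma>) \<tau> = 0" for \<tau>
      proof (rule ccontr)
        assume "ext K D (incid \<sigma>) \<tau> \<noteq> 0"
        then obtain \<rho> where r: "\<rho> \<in> K" "incid \<sigma> \<rho> \<noteq> 0" "D \<rho> \<tau> \<noteq> 0" using ext_nz by blast
        have "card \<rho> \<le> p" using face[OF r(2)] True by simp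
        then show False using IH[OF r(1,2)] r(3) by blast
      qed
      have "(if card \<rho> = 1 then zz \<sigma> \<rho> else 0) = f \<sigma> \<rho> - g \<sigma> \<rho>" if "\<rho> \<in> K" for \<rho>
      proof (cases "card \<rho> = 1")
        case True then show ?thesis unfolding zz_def using e by simp
      next
        case c1: False
        have "f \<sigma> \<rho> = 0" using cap_support[OF K G1 F Tc s, of \<rho>] c1 True by auto
        moreover have "g \<sigma> \<rho> = 0" using cap_support[OF K G2 F Tc s, of \<rho>] c1 True by auto
        ultimately show ?thesis using c1 by simp
      qed
      then have "(\<Sum>\<rho>\<in>K. if card \<rho> = 1 then zz \<sigma> \<rho> else 0) = (\<Sum>\<rho>\<in>K. f \<sigma> \<rho>) - (\<Sum>\<rho>\<in>K. g \<sigma> \<rho>)"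
        by (simp add: sum_subtractf)
      also have "\<dots> = 0" using cap_aug[OF K good_ord[OF G1] s True] cap_aug[OF K good_ord[OF G2] s True] by simp
      finally show ?thesis .
    qed
    have Du: "D \<sigma> = cone (Min (\<sigma> \<inter> \<Union>L)) (zz \<sigma>)" using D_unfold[OF s] .
    show "(\<forall>\<tau>. D \<sigma> \<tau> \<noteq> 0 \<longrightarrow> \<tau> \<subseteq> \<sigma> \<inter> \<Union>L \<and> \<tau> \<noteq> {} \<and> card \<tau> + p = Suc (card \<sigma>)) \<and>
     (card \<sigma> \<le> p \<longrightarrow> (\<forall>\<tau>. D \<sigma> \<tau> = 0)) \<and>
     (\<forall>\<tau>. bd K (D \<sigma>) \<tau> + ext K D (incid \<sigma>) \<tau> = f \<sigma> \<tau> - g \<sigma> \<tau>)"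
    proof (cases "\<sigma> \<inter> \<Union>L = {}")
      case True
      have "zz \<sigma> = (\<lambda>_. 0)" using zsupp True by blast
      then have D0: "D \<sigma> = (\<lambda>_. 0)" unfolding Du by (simp add: cone_zero)
      have "bd K (D \<sigma>) \<tau> = 0" for \<tau> unfolding D0 bd_def by simp
      moreover have "ext K D (incid \<sigma>) \<tau> = f \<sigma> \<tau> - g \<sigma> \<tau>" for \<tau>
        using \<open>zz \<sigma> = (\<lambda>_. 0)\<close> unfolding zz_def by (metis diff_eq_diff_eq diff_self)
      ultimately show ?thesis using D0 by simp
    next
      case False
      define v where "v = Min (\<sigma> \<inter> \<Union>L)"
      have fS: "finite (\<sigma> \<inter> \<Union>L)" using fs by simp
      have vS: "v \<in> \<sigma> \<inter> \<Union>L" unfolding v_def using Min_in[OF fS False] .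
      have SK: "\<sigma> \<inter> \<Union>L \<in> K" by (rule sc_face[OF K s]) (use False in auto)
      have ci: "bd K (cone v (zz \<sigma>)) \<tau> + cone v (bd K (zz \<sigma>)) \<tau> =
          zz \<sigma> \<tau> - (if \<tau> = {v} then (\<Sum>\<rho>\<in>K. if card \<rho> = 1 then zz \<sigma> \<rho> else 0) else 0)" for \<tau>
        by (rule cone_identity[OF K SK vS]) (use zsupp in blast)
      have cb: "cone v (bd K (zz \<sigma>)) = (\<lambda>_. 0)"
        using bdz cone_zero[of v] by (metis (no_types) ext)
      have B: "bd K (D \<sigma>) \<tau> = zz \<sigma> \<tau>" for \<tau>
        using ci[of \<tau>] aug unfolding Du v_def[symmetric] cb by simp
      have A: "\<tau> \<subseteq> \<sigma> \<inter> \<Union>L \<and> \<tau> \<noteq> {} \<and> card \<tau> + p = Suc (card \<sigma>)" if nz: "D \<sigma> \<tau> \<noteq> 0" for \<tau>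
      proof -
        have h: "v \<in> \<tau>" "\<tau> - {v} \<noteq> {}" "zz \<sigma> (\<tau> - {v}) \<noteq> 0"
          using nz unfolding Du v_def[symmetric] cone_def by (auto split: if_splits)
        have "\<tau> - {v} \<subseteq> \<sigma> \<inter> \<Union>L" "card (\<tau> - {v}) + p = card \<sigma>" using zsupp[OF h(3)] by auto
        moreover have "finite \<tau>" using \<open>\<tau> - {v} \<subseteq> \<sigma> \<inter> \<Union>L\<close> fS by (metis finite_Diff2 finite_subset finite.emptyI finite_insert)
        moreover have "card \<tau> = Suc (card (\<tau> - {v}))" using calculation(3) h(1) by (metis card_Suc_Diff1)
        ultimately have c: "card \<tau> + p = Suc (card \<sigma>)" by linarith
        have "\<tau> \<subseteq> \<sigma> \<inter> \<Union>L" using \<open>\<tau> - {v} \<subseteq> \<sigma> \<inter> \<Union>L\<close> vS by blast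
        then show ?thesis using c h(1) by blast
      qed
      have C: "D \<sigma> \<tau> = 0" if "card \<sigma> \<le> p" for \<tau>
      proof -
        have "zz \<sigma> = (\<lambda>_. 0)" using small[OF that] by blast
        then show ?thesis unfolding Du by (simp add: cone_zero)
      qed
      show ?thesis
      proof (intro conjI allI impI)
        fix \<tau> show "bd K (D \<sigma>) \<tau> + ext K D (incid \<sigma>) \<tau> = f \<sigma> \<tau> - g \<sigma> \<tau>"
          using B[of \<tau>] unfolding zz_def by simp
      qed (use A C in blast)+
    qed
  qed
qed

end





context homot begin

lemma D_props:
  assumes s: "\<sigma> \<in> K"
  shows "D \<sigma> \<tau> \<noteq> 0 \<Longrightarrow> \<tau> \<subseteq> \<sigma> \<inter> \<Union>L \<and> \<tau> \<noteq> {} \<and> card \<tau> + p = Suc (card \<sigma>)"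
    and "bd K (D \<sigma>) \<tau> + ext K D (incid \<sigma>) \<tau> = f \<sigma> \<tau> - g \<sigma> \<tau>"
  using main_ind[of "card \<sigma>"] s by blast+

lemma homotopy:
  "ext K f c \<tau> - ext K g c \<tau> = bd K (ext K D c) \<tau> + ext K D (bd K c) \<tau>"
proof -
  have "bd K (ext K D c) \<tau> + ext K D (bd K c) \<tau> =
      ext K (\<lambda>\<sigma> \<tau>. bd K (D \<sigma>) \<tau> + ext K D (incid \<sigma>) \<tau>) c \<tau>"
    unfolding ext_add bd_ext ext_comp ..
  also have "\<dots> = ext K (\<lambda>\<sigma> \<tau>. f \<sigma> \<tau> - g \<sigma> \<tau>) c \<tau>"
    by (rule arg_cong[where f="\<lambda>h. h \<tau>"], rule ext_cong) (use D_props(2) in auto)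
  also have "\<dots> = ext K f c \<tau> - ext K g c \<tau>" by (rule ext_diff)
  finally show ?thesis by simp
qed

end

lemma bd_sub:
  assumes "finite K" "L \<subseteq> K" "\<And>\<sigma>. d \<sigma> \<noteq> 0 \<Longrightarrow> \<sigma> \<in> L"
  shows "bd L d = bd K d"
proof
  fix \<tau>
  show "bd L d \<tau> = bd K d \<tau>" unfolding bd_def
    by (rule sum.mono_neutral_left) (use assms in auto)
qed

lemma cap_chainmap:
  assumes K: "simplicial_complex K" and R: "ordering K R" and coc: "cocycle K p T" and ev: "even p"
  shows "bd K (cap K p R T c) = cap K p R T (bd K c)"
proof -
  have "bd K (cap K p R T c) = ext K (\<lambda>\<sigma>. bd K (cap_simplex p R T \<sigma>)) c"
    unfolding cap_ext bd_ext ext_comp ..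
  also have "\<dots> = ext K (\<lambda>\<sigma>. ext K (cap_simplex p R T) (incid \<sigma>)) c"
  proof (rule ext_cong)
    fix \<sigma> assume "\<sigma> \<in> K"
    then show "bd K (cap_simplex p R T \<sigma>) = ext K (cap_simplex p R T) (incid \<sigma>)"
      using cap_chain[OF K R coc ev] unfolding ext_def by auto
  qed
  also have "\<dots> = cap K p R T (bd K c)" unfolding cap_ext bd_ext ext_comp ..
  finally show ?thesis .
qed

lemma ext_nz': "ext K F c \<tau> \<noteq> 0 \<Longrightarrow> \<exists>\<sigma>\<in>K. c \<sigma> \<noteq> 0 \<and> F \<sigma> \<tau> \<noteq> 0"
  unfolding ext_def by (metis (no_types, lifting) mult_zero_left mult_zero_right sum.neutral)

lemma cap_chain_deg:
  assumes K: "simplicial_complex K" and R: "good_ordering K L R" and F: "full_subcomplex L K"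
    and T: "rel_cochain K (Wcomplex K L) p T"
    and K0: "simplicial_complex K0" "K0 \<subseteq> K"
    and c: "chain K0 k c"
  shows "\<forall>\<tau>. cap K p R T c \<tau> \<noteq> 0 \<longrightarrow> \<tau> \<in> K0 \<and> \<tau> \<in> L \<and> card \<tau> + p = Suc k"
proof (intro allI impI)
  fix \<tau> assume "cap K p R T c \<tau> \<noteq> 0"
  then obtain \<sigma> where s: "\<sigma> \<in> K" "c \<sigma> \<noteq> 0" "cap_simplex p R T \<sigma> \<tau> \<noteq> 0"
    using ext_nz'[of K "cap_simplex p R T" c \<tau>] unfolding cap_ext by blast
  have s0: "\<sigma> \<in> K0" "card \<sigma> = Suc k" using c s(2) unfolding chain_def by auto
  have h: "\<tau> \<subseteq> \<sigma> \<and> \<tau> \<subseteq> \<Union>L \<and> \<tau> \<in> L \<and> card \<tau> + p = card \<sigma>" using cap_support[OF K R F T s(1,3)] .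
  have "\<tau> \<noteq> {}" using h full_sub[OF F] sc_ne[OF K] by blast
  then have "\<tau> \<in> K0" using sc_face[OF K0(1) s0(1)] h by blast
  then show "\<tau> \<in> K0 \<and> \<tau> \<in> L \<and> card \<tau> + p = Suc k" using h s0 by simp
qed

theorem propositionB2:
  fixes K L Ks :: "'v::linorder set set" and T :: "'v set \<Rightarrow> rat" and p :: nat
  assumes "simplicial_complex K"
    and "full_subcomplex L K"
    and "p > 0" and "even p"
    and "rel_cochain K (Wcomplex K L) p T" and "cocycle K p T"
    and "subcomplex Ks K"
  shows "(\<forall>R q c. good_ordering K L R \<and> rel_cycle K Ks (p + q) c \<longrightarrow>
             rel_cycle L (Ks \<inter> L) q (cap K p R T c))
       \<and> (\<forall>R q c. good_ordering K L R \<and> rel_boundary K Ks (p + q) c \<longrightarrow>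
             rel_boundary L (Ks \<inter> L) q (cap K p R T c))
       \<and> (\<forall>R1 R2 q c. good_ordering K L R1 \<and> good_ordering K L R2 \<and> rel_cycle K Ks (p + q) c \<longrightarrow>
             rel_boundary L (Ks \<inter> L) q (\<lambda>\<tau>. cap K p R1 T c \<tau> - cap K p R2 T c \<tau>))"
proof -
  note K = assms(1) and F = assms(2) and p0 = assms(3) and ev = assms(4) and Tc = assms(5) and coc = assms(6)
  have Ks: "simplicial_complex Ks" "Ks \<subseteq> K" using assms(7) unfolding subcomplex_def by auto
  have KK: "simplicial_complex K" "K \<subseteq> K" using K by auto
  have fK: "finite K" using sc_finK[OF K] .
  have LK: "L \<subseteq> K" using full_sub[OF F] .
  have P1: "rel_cycle L (Ks \<inter> L) q (cap K p R T c)" if R: "good_ordering K L R" and c: "rel_cycle K Ks (p + q) c" for R q c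
  proof -
    have c1: "chain K (p + q) c" and c2: "chain Ks (p + q - 1) (bd K c)" using c unfolding rel_cycle_def by auto
    have a1: "\<forall>\<tau>. cap K p R T c \<tau> \<noteq> 0 \<longrightarrow> \<tau> \<in> K \<and> \<tau> \<in> L \<and> card \<tau> + p = Suc (p + q)"
      using cap_chain_deg[OF K R F Tc KK c1] .
    have a2: "\<forall>\<tau>. cap K p R T (bd K c) \<tau> \<noteq> 0 \<longrightarrow> \<tau> \<in> Ks \<and> \<tau> \<in> L \<and> card \<tau> + p = Suc (p + q - 1)"
      using cap_chain_deg[OF K R F Tc Ks c2] .
    have bdeq: "bd L (cap K p R T c) = cap K p R T (bd K c)"
      using bd_sub[OF fK LK, of "cap K p R T c"] a1 cap_chainmap[OF K good_ord[OF R] coc ev] by auto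
    have "chain L q (cap K p R T c)" unfolding chain_def using a1 by auto
    moreover have "chain (Ks \<inter> L) (q - 1) (bd L (cap K p R T c))"
      unfolding chain_def bdeq
    proof (intro allI impI)
      fix \<tau> assume nz: "cap K p R T (bd K c) \<tau> \<noteq> 0"
      have h: "\<tau> \<in> Ks" "\<tau> \<in> L" "card \<tau> + p = Suc (p + q - 1)" using a2 nz by auto
      have "card \<tau> \<noteq> 0" using h(2) full_sub[OF F] sc_ne[OF K] sc_fin[OF K] by (metis card_0_eq subsetD)
      then show "\<tau> \<in> Ks \<inter> L \<and> card \<tau> = Suc (q - 1)" using h p0 by auto
    qed
    ultimately show ?thesis unfolding rel_cycle_def by simp
  qed
  have P2: "rel_boundary L (Ks \<inter> L) q (cap K p R T c)" if R: "good_ordering K L R" and c: "rel_boundary K Ks (p + q) c" for R q c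
  proof -
    obtain d e where d: "chain K (Suc (p + q)) d" and e: "chain Ks (p + q) e" and ce: "c = (\<lambda>\<tau>. bd K d \<tau> + e \<tau>)"
      using c unfolding rel_boundary_def by blast
    have a1: "\<forall>\<tau>. cap K p R T d \<tau> \<noteq> 0 \<longrightarrow> \<tau> \<in> K \<and> \<tau> \<in> L \<and> card \<tau> + p = Suc (Suc (p + q))"
      using cap_chain_deg[OF K R F Tc KK d] .
    have a2: "\<forall>\<tau>. cap K p R T e \<tau> \<noteq> 0 \<longrightarrow> \<tau> \<in> Ks \<and> \<tau> \<in> L \<and> card \<tau> + p = Suc (p + q)"
      using cap_chain_deg[OF K R F Tc Ks e] .
    have bdeq: "bd L (cap K p R T d) = cap K p R T (bd K d)"
      using bd_sub[OF fK LK, of "cap K p R T d"] a1 cap_chainmap[OF K good_ord[OF R] coc ev] by auto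
    have "cap K p R T c = (\<lambda>\<tau>. bd L (cap K p R T d) \<tau> + cap K p R T e \<tau>)"
      unfolding ce bdeq by (rule ext) (simp add: cap_ext ext_addc)
    moreover have "chain L (Suc q) (cap K p R T d)" unfolding chain_def using a1 by auto
    moreover have "chain (Ks \<inter> L) q (cap K p R T e)" unfolding chain_def using a2 by auto
    ultimately show ?thesis unfolding rel_boundary_def by blast
  qed
  have P3: "rel_boundary L (Ks \<inter> L) q (\<lambda>\<tau>. cap K p R1 T c \<tau> - cap K p R2 T c \<tau>)"
    if R1: "good_ordering K L R1" and R2: "good_ordering K L R2" and c: "rel_cycle K Ks (p + q) c" for R1 R2 q c
  proof -
    interpret H: homot K L p T R1 R2 using K F ev Tc coc R1 R2 by unfold_locales
    have c1: "chain K (p + q) c" and c2: "chain Ks (p + q - 1) (bd K c)" using c unfolding rel_cycle_def by auto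
    define d where "d = ext K H.D c"
    define e where "e = ext K H.D (bd K c)"
    have dch: "chain L (Suc q) d" unfolding chain_def
    proof (intro allI impI)
      fix \<tau> assume "d \<tau> \<noteq> 0"
      then obtain \<sigma> where s: "\<sigma> \<in> K" "c \<sigma> \<noteq> 0" "H.D \<sigma> \<tau> \<noteq> 0" using ext_nz' unfolding d_def by blast
      have cs: "card \<sigma> = Suc (p + q)" using c1 s(2) unfolding chain_def by auto
      have h: "\<tau> \<subseteq> \<sigma> \<inter> \<Union>L" "\<tau> \<noteq> {}" "card \<tau> + p = Suc (card \<sigma>)" using H.D_props(1)[OF s(1) s(3)] by auto
      have "\<tau> \<in> K" using sc_face[OF K s(1)] h by blast
      then have "\<tau> \<in> L" using full_in[OF F] h by blast
      then show "\<tau> \<in> L \<and> card \<tau> = Suc (Suc q)" using h cs by simp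
    qed
    have ech: "chain (Ks \<inter> L) q e" unfolding chain_def
    proof (intro allI impI)
      fix \<tau> assume "e \<tau> \<noteq> 0"
      then obtain \<rho> where s: "\<rho> \<in> K" "bd K c \<rho> \<noteq> 0" "H.D \<rho> \<tau> \<noteq> 0" using ext_nz' unfolding e_def by blast
      have cs: "\<rho> \<in> Ks" "card \<rho> = Suc (p + q - 1)" using c2 s(2) unfolding chain_def by auto
      have h: "\<tau> \<subseteq> \<rho> \<inter> \<Union>L" "\<tau> \<noteq> {}" "card \<tau> + p = Suc (card \<rho>)" using H.D_props(1)[OF s(1) s(3)] by auto
      have "\<tau> \<in> Ks" using sc_face[OF Ks(1) cs(1)] h by blast
      moreover have "\<tau> \<in> K" using sc_face[OF K s(1)] h by blast
      then have "\<tau> \<in> L" using full_in[OF F] h by blast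
      ultimately show "\<tau> \<in> Ks \<inter> L \<and> card \<tau> = Suc q" using h cs p0 by auto
    qed
    have bdeq: "bd L d = bd K d" using bd_sub[OF fK LK, of d] dch unfolding chain_def by auto
    have "cap K p R1 T c \<tau> - cap K p R2 T c \<tau> = bd K d \<tau> + e \<tau>" for \<tau>
      unfolding d_def e_def cap_ext by (rule H.homotopy)
    then have "(\<lambda>\<tau>. cap K p R1 T c \<tau> - cap K p R2 T c \<tau>) = (\<lambda>\<tau>. bd L d \<tau> + e \<tau>)"
      unfolding bdeq by simp
    then show ?thesis unfolding rel_boundary_def using dch ech by blast
  qed
  show ?thesis using P1 P2 P3 by blast
qed



end
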